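(* Let $n\ge1$ and $d\in\mathbb{N}$, and define $N$ by $N(n,d)=N+1$. Let $X\subset\mathbb{R}^n$ be a self-similar set with $\operatorname{Hdeg}(X)\ge d+1$. Then $\tau^d_{N,\mathbf{s}}(X)=\mathcal{P}_d^*$ for every $\mathbf{s}\in X$.
   Context: $N(n,d):=\binom{n+d}{d}$, the dimension of the space $\mathcal{P}_d$ of real polynomials in $n$ variables of degree $\le d$; $\mathcal{P}_d^*$ is its dual. For $A\subset\mathbb{R}^n$, $\operatorname{Hdeg}(A)$ is the minimum degree of a nonzero polynomial vanishing on $A$ ($\infty$ if none exists). A map $\varphi:\mathbb{R}^n\to\mathbb{R}^n$ is a contraction if $\|\varphi(\mathbf{x})-\varphi(\mathbf{y})\|\le K\|\mathbf{x}-\mathbf{y}\|$ for some $K\in(0,1)$. Given contractions $\varphi_1,\dots,\varphi_p$, there is a unique nonempty compact $S$ with $S=\bigcup_i\varphi_i(S)$ (the attractor). A similarity transformation is an affine map preserving the angle of every ordered triple of points (equivalently $\|\varphi(\mathbf{x})-\varphi(\mathbf{y})\|=\lambda\|\mathbf{x}-\mathbf{y}\|$ for some $\lambda>0$). A set is self-similar if it is the attractor of $p\ge2$ contractions that are all similarity transformations. For $\mathbf{a}\in\mathbb{R}^n$ and $|\mathbf{p}|\le d$, $\delta^{(\mathbf{p})}_{\mathbf{a}}\in\mathcal{P}_d^*$ is $f\mapsto(-1)^{|\mathbf{p}|}\partial^{|\mathbf{p}|}f/\partial\mathbf{x}^{\mathbf{p}}(\mathbf{a})$, $\delta_{\mathbf{a}}=\delta^{(\mathbf{0})}_{\mathbf{a}}$.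 A bundle over $X$ is a subset $E\subset X\times\mathcal{P}_d^*$ whose fibres $E_{\mathbf{a}}=\{\xi:(\mathbf{a},\xi)\in E\}$ are linear subspaces. Higher order paratangent bundle $\tau^d_N(X)$: put $E_0=\{(\mathbf{a},\lambda\delta_{\mathbf{a}}):\mathbf{a}\in X,\lambda\in\mathbb{R}\}$. Given $E_k$, let $\Delta E_k$ be the set of $(\mathbf{a}_0,\dots,\mathbf{a}_N,\xi_0+\dots+\xi_N)\in X^{N+1}\times\mathcal{P}_d^*$ with $\mathbf{a}_i\in X$, $\xi_i\in E_{k,\mathbf{a}_i}$ and $|\mathbf{a}_i-\mathbf{a}_0|^{d-|\alpha|}\,|\xi_i((\mathbf{x}-\mathbf{a}_i)^\alpha)|\le1$ for all multi-indices $|\alpha|\le d$, $0\le i\le N$. Let $E'_k$ be the set of $(\mathbf{a},\xi)\in X\times\mathcal{P}_d^*$ with $(\mathbf{a},\dots,\mathbf{a},\xi)$ in the closure of $\Delta E_k$, and $E_{k+1}$ the bundle whose fibre at $\mathbf{a}$ is the linear span of $E'_{k,\mathbf{a}}$. The increasing sequence $E_k$ stabilizes and $\tau^d_N(X):=E_{2\dim\mathcal{P}_d^*}$; $\tau^d_{N,\mathbf{a}}(X)$ is its fibre at $\mathbf{a}$. *)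

theory Defs
  imports "HOL-Analysis.Analysis"
begin

type_synonym 'n mindex = "'n \<Rightarrow> nat"

definition mdeg :: "('n::finite) mindex \<Rightarrow> nat" where
  "mdeg \<alpha> = (\<Sum>i\<in>UNIV. \<alpha> i)"

definition mindices :: "nat \<Rightarrow> ('n::finite) mindex set" where
  "mindices d = {\<alpha>. mdeg \<alpha> \<le> d}"

definition mono :: "real^'n::finite \<Rightarrow> 'n mindex \<Rightarrow> real" where
  "mono x \<alpha> = (\<Prod>i\<in>UNIV. (x $ i) ^ (\<alpha> i))"

definition Ndim :: "nat \<Rightarrow> nat \<Rightarrow> nat" where
  "Ndim n d = (n + d) choose d"

(* Polynomials: coefficient functions (coefficient of x^alpha) with finite support *)
definition is_poly :: "(('n::finite) mindex \<Rightarrow> real) \<Rightarrow> bool" where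
  "is_poly c \<longleftrightarrow> finite {\<alpha>. c \<alpha> \<noteq> 0}"

definition pdeg :: "(('n::finite) mindex \<Rightarrow> real) \<Rightarrow> nat" where
  "pdeg c = Max (insert 0 (mdeg ` {\<alpha>. c \<alpha> \<noteq> 0}))"

definition peval :: "(('n::finite) mindex \<Rightarrow> real) \<Rightarrow> real^'n \<Rightarrow> real" where
  "peval c x = (\<Sum>\<alpha>\<in>{\<alpha>. c \<alpha> \<noteq> 0}. c \<alpha> * mono x \<alpha>)"

(* Hdeg(A): minimal degree of a nonzero polynomial vanishing on A (infinity if none) *)
definition Hdeg :: "(real^'n::finite) set \<Rightarrow> enat" where
  "Hdeg A = (INF c \<in> {c. is_poly c \<and> c \<noteq> (\<lambda>_. 0) \<and> (\<forall>x\<in>A. peval c x = 0)}. enat (pdeg c))"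

(* The dual P_d^*: a functional xi is represented by its values xi(x^alpha) on the
   monomial basis of P_d; entries outside |alpha| <= d are 0. *)
definition dual_space :: "nat \<Rightarrow> (('n::finite) mindex \<Rightarrow> real) set" where
  "dual_space d = {\<xi>. \<forall>\<alpha>. \<alpha> \<notin> mindices d \<longrightarrow> \<xi> \<alpha> = 0}"

definition dapply :: "nat \<Rightarrow> (('n::finite) mindex \<Rightarrow> real) \<Rightarrow> ('n mindex \<Rightarrow> real) \<Rightarrow> real" where
  "dapply d \<xi> c = (\<Sum>\<alpha>\<in>mindices d. c \<alpha> * \<xi> \<alpha>)"

(* coefficients of (x - a)^alpha (binomial expansion) *)
definition shifted_mono :: "real^'n::finite \<Rightarrow> 'n mindex \<Rightarrow> ('n mindex \<Rightarrow> real)" where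
  "shifted_mono a \<alpha> = (\<lambda>\<beta>. if (\<forall>i. \<beta> i \<le> \<alpha> i)
       then (\<Prod>i\<in>UNIV. real (\<alpha> i choose \<beta> i) * (- (a $ i)) ^ (\<alpha> i - \<beta> i)) else 0)"

definition delta :: "nat \<Rightarrow> real^'n::finite \<Rightarrow> ('n mindex \<Rightarrow> real)" where
  "delta d a = (\<lambda>\<alpha>. if \<alpha> \<in> mindices d then mono a \<alpha> else 0)"

definition fspan :: "(('n::finite) mindex \<Rightarrow> real) set \<Rightarrow> ('n mindex \<Rightarrow> real) set" where
  "fspan S = {\<xi>. \<exists>F c. finite F \<and> F \<subseteq> S \<and> \<xi> = (\<lambda>\<alpha>. \<Sum>v\<in>F. c v * v \<alpha>)}"

definition fibre :: "('a \<times> 'b) set \<Rightarrow> 'a \<Rightarrow> 'b set" where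
  "fibre E a = {\<xi>. (a, \<xi>) \<in> E}"

(* Delta E: tuples (a_0..a_N) are encoded as functions nat => real^'n that are 0 for i > N *)
definition DeltaE :: "(real^'n::finite) set \<Rightarrow> nat \<Rightarrow> nat \<Rightarrow> ((real^'n) \<times> ('n mindex \<Rightarrow> real)) set
     \<Rightarrow> ((nat \<Rightarrow> (real^'n)) \<times> ('n mindex \<Rightarrow> real)) set" where
  "DeltaE X d N E = {(as, \<xi>) | as \<xi> \<xi>s.
      (\<forall>i\<le>N. as i \<in> X \<and> \<xi>s i \<in> fibre E (as i) \<and>
         (\<forall>\<alpha>\<in>mindices d. norm (as i - as 0) ^ (d - mdeg \<alpha>) * \<bar>dapply d (\<xi>s i) (shifted_mono (as i) \<alpha>)\<bar> \<le> 1)) \<and>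
      (\<forall>i>N. as i = 0) \<and>
      \<xi> = (\<lambda>\<alpha>. \<Sum>i\<le>N. \<xi>s i \<alpha>)}"

definition Eprime :: "(real^'n::finite) set \<Rightarrow> nat \<Rightarrow> nat \<Rightarrow> ((real^'n) \<times> ('n mindex \<Rightarrow> real)) set
     \<Rightarrow> ((real^'n) \<times> ('n mindex \<Rightarrow> real)) set" where
  "Eprime X d N E = {(a, \<xi>). a \<in> X \<and> ((\<lambda>i. if i \<le> N then a else 0), \<xi>) \<in> closure (DeltaE X d N E)}"

primrec Eseq :: "(real^'n::finite) set \<Rightarrow> nat \<Rightarrow> nat \<Rightarrow> nat \<Rightarrow> ((real^'n) \<times> ('n mindex \<Rightarrow> real)) set" where
  "Eseq X d N 0 = {(a, \<xi>). a \<in> X \<and> (\<exists>t::real. \<xi> = (\<lambda>\<alpha>. t * delta d a \<alpha>))}"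
| "Eseq X d N (Suc k) = {(a, \<xi>). a \<in> X \<and> \<xi> \<in> fspan (fibre (Eprime X d N (Eseq X d N k)) a)}"

(* tau^d_N(X) = E_{2 dim P_d^*} *)
definition paratangent :: "(real^'n::finite) set \<Rightarrow> nat \<Rightarrow> nat \<Rightarrow> ((real^'n) \<times> ('n mindex \<Rightarrow> real)) set" where
  "paratangent X d N = Eseq X d N (2 * Ndim CARD('n) d)"

definition similarity :: "(real^'n::finite \<Rightarrow> real^'n) \<Rightarrow> real \<Rightarrow> bool" where
  "similarity \<phi> r \<longleftrightarrow> r > 0 \<and> (\<forall>x y. dist (\<phi> x) (\<phi> y) = r * dist x y)"

definition self_similar :: "(real^'n::finite) set \<Rightarrow> bool" where
  "self_similar S \<longleftrightarrow> (\<exists>p::nat. \<exists>\<phi>::nat \<Rightarrow> real^'n \<Rightarrow> real^'n. p \<ge> 2 \<and>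
      (\<forall>i<p. \<exists>r. r < 1 \<and> similarity (\<phi> i) r) \<and>
      S \<noteq> {} \<and> compact S \<and> S = (\<Union>i<p. \<phi> i ` S))"

end

theory Submission
  imports Defs "HOL-Library.Function_Algebras"
begin
lemma tendsto_fun_coord:
  fixes f :: "'a \<Rightarrow> 'b \<Rightarrow> 'c::topological_space"
  assumes "\<And>i. ((\<lambda>c. f c i) \<longlongrightarrow> l i) F"
  shows "(f \<longlongrightarrow> l) F"
proof -
  have "limitin (product_topology (\<lambda>_. euclidean) UNIV) f l F"
    using assms by (simp add: limitin_componentwise)
  then show ?thesis by (metis euclidean_product_topology limitin_canonical_iff)
qed

lemma mindices_le: "\<alpha> \<in> mindices d \<Longrightarrow> \<alpha> i \<le> d"
  unfolding mindices_def mdeg_def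
  by (auto intro: order_trans[OF member_le_sum[of i UNIV \<alpha>]])

lemma finite_mindices: "finite (mindices d :: ('n::finite) mindex set)"
proof -
  have "mindices d \<subseteq> PiE UNIV (\<lambda>_. {..d})"
    using mindices_le by (auto simp: PiE_UNIV_domain)
  moreover have "finite (PiE (UNIV::'n set) (\<lambda>_. {..d}))"
    by (intro finite_PiE) auto
  ultimately show ?thesis by (rule finite_subset)
qed

lemma mindices_mono: "i \<le> j \<Longrightarrow> mindices i \<subseteq> mindices j"
  by (auto simp: mindices_def)

lemma mdeg_add: "mdeg (\<alpha> + \<beta>) = mdeg \<alpha> + mdeg (\<beta>::('n::finite) mindex)"
  by (simp add: mdeg_def sum.distrib)

lemma mono_add: "mono x (\<alpha> + \<beta>) = mono x \<alpha> * mono x \<beta>"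
  by (simp add: mono_def power_add prod.distrib)

lemma mono_zero_idx: "mono x (\<lambda>_. 0) = 1"
  by (simp add: mono_def)

lemma mono_scale: "mono (r *\<^sub>R x) \<gamma> = r ^ mdeg \<gamma> * mono x \<gamma>"
  by (simp add: mono_def mdeg_def power_mult_distrib prod.distrib power_sum)

lemma mdeg_zero_iff: "mdeg \<alpha> = 0 \<longleftrightarrow> \<alpha> = (\<lambda>_. 0)"
  by (auto simp: mdeg_def fun_eq_iff)

lemma mindices_0: "mindices 0 = {\<lambda>_. 0}"
  by (auto simp: mindices_def mdeg_zero_iff)

definition polyfun :: "nat \<Rightarrow> (real^'n::finite \<Rightarrow> real) \<Rightarrow> bool" where
  "polyfun j f \<longleftrightarrow> (\<exists>c. \<forall>x. f x = (\<Sum>\<alpha>\<in>mindices j. c \<alpha> * mono x \<alpha>))"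

lemma polyfun_sum_superset:
  assumes "finite F" "mindices j \<subseteq> F" "\<forall>\<alpha>\<in>F - mindices j. c \<alpha> = 0"
  shows "(\<Sum>\<alpha>\<in>F. c \<alpha> * mono x \<alpha>) = (\<Sum>\<alpha>\<in>mindices j. c \<alpha> * mono x \<alpha>)"
  using assms by (intro sum.mono_neutral_right) auto

lemma polyfun_mono_deg:
  assumes "polyfun i f" "i \<le> j" shows "polyfun j f"
proof -
  obtain c where c: "\<And>x. f x = (\<Sum>\<alpha>\<in>mindices i. c \<alpha> * mono x \<alpha>)"
    using assms unfolding polyfun_def by blast
  define c' where "c' \<alpha> = (if \<alpha> \<in> mindices i then c \<alpha> else 0)" for \<alpha>
  have "f x = (\<Sum>\<alpha>\<in>mindices j. c' \<alpha> * mono x \<alpha>)" for x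
  proof -
    have "f x = (\<Sum>\<alpha>\<in>mindices i. c' \<alpha> * mono x \<alpha>)" by (simp add: c c'_def)
    also have "\<dots> = (\<Sum>\<alpha>\<in>mindices j. c' \<alpha> * mono x \<alpha>)"
      using mindices_mono[OF assms(2)] finite_mindices
      by (intro sum.mono_neutral_left) (auto simp: c'_def)
    finally show ?thesis .
  qed
  then show ?thesis unfolding polyfun_def by blast
qed

lemma polyfun_const: "polyfun j (\<lambda>x. a)"
proof -
  have "polyfun 0 (\<lambda>x. a)"
    unfolding polyfun_def mindices_0
    by (rule exI[of _ "\<lambda>_. a"]) (simp add: mono_zero_idx)
  then show ?thesis by (rule polyfun_mono_deg) simp
qed

lemma polyfun_monomial: "mdeg \<alpha> \<le> j \<Longrightarrow> polyfun j (\<lambda>x::real^'n::finite. mono x \<alpha>)"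
proof -
  assume a: "mdeg \<alpha> \<le> j"
  have "mono x \<alpha> = (\<Sum>\<beta>\<in>mindices j. (if \<beta> = \<alpha> then 1 else 0) * mono x \<beta>)" for x
  proof -
    have "(\<Sum>\<beta>\<in>mindices j. (if \<beta> = \<alpha> then 1 else 0) * mono x \<beta>) = (\<Sum>\<beta>\<in>mindices j. if \<beta> = \<alpha> then mono x \<beta> else 0)"
      by (intro sum.cong) auto
    also have "\<dots> = mono x \<alpha>" using a finite_mindices[where 'n='n and d=j] by (simp add: mindices_def sum.delta sum.delta')
    finally show ?thesis by simp
  qed
  then show ?thesis unfolding polyfun_def by (intro exI[of _ "\<lambda>\<beta>. if \<beta> = \<alpha> then 1 else 0"]) blast
qed

lemma polyfun_add:
  assumes "polyfun j f" "polyfun j g" shows "polyfun j (\<lambda>x. f x + g x)"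
proof -
  obtain c e where "\<And>x. f x = (\<Sum>\<alpha>\<in>mindices j. c \<alpha> * mono x \<alpha>)"
    "\<And>x. g x = (\<Sum>\<alpha>\<in>mindices j. e \<alpha> * mono x \<alpha>)"
    using assms unfolding polyfun_def by metis
  then have "f x + g x = (\<Sum>\<alpha>\<in>mindices j. (c \<alpha> + e \<alpha>) * mono x \<alpha>)" for x
    by (simp add: sum.distrib distrib_right)
  then show ?thesis unfolding polyfun_def by (intro exI[of _ "\<lambda>\<alpha>. c \<alpha> + e \<alpha>"]) blast
qed

lemma polyfun_cmult:
  assumes "polyfun j f" shows "polyfun j (\<lambda>x. a * f x)"
proof -
  obtain c where "\<And>x. f x = (\<Sum>\<alpha>\<in>mindices j. c \<alpha> * mono x \<alpha>)"
    using assms unfolding polyfun_def by metis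
  then have "a * f x = (\<Sum>\<alpha>\<in>mindices j. (a * c \<alpha>) * mono x \<alpha>)" for x
    by (simp add: sum_distrib_left mult.assoc)
  then show ?thesis unfolding polyfun_def by (intro exI[of _ "\<lambda>\<alpha>. a * c \<alpha>"]) blast
qed

lemma polyfun_sum:
  assumes "finite S" "\<And>i. i \<in> S \<Longrightarrow> polyfun j (f i)"
  shows "polyfun j (\<lambda>x. \<Sum>i\<in>S. f i x)"
  using assms
proof (induction S rule: finite_induct)
  case empty
  then show ?case using polyfun_const[of j 0] by simp
next
  case (insert a S)
  then show ?case by (simp add: polyfun_add)
qed

lemma polyfun_mult:
  fixes f g :: "real^'n::finite \<Rightarrow> real"
  assumes "polyfun i f" "polyfun j g" shows "polyfun (i + j) (\<lambda>x. f x * g x)"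
proof -
  obtain c e where c: "\<And>x. f x = (\<Sum>\<alpha>\<in>mindices i. c \<alpha> * mono x \<alpha>)"
    and e: "\<And>x. g x = (\<Sum>\<alpha>\<in>mindices j. e \<alpha> * mono x \<alpha>)"
    using assms unfolding polyfun_def by metis
  define P where "P = (mindices i :: 'n mindex set) \<times> (mindices j :: 'n mindex set)"
  have fP: "finite P" unfolding P_def using finite_mindices by (intro finite_cartesian_product)
  define h where "h \<gamma> = (\<Sum>p\<in>{p\<in>P. fst p + snd p = \<gamma>}. c (fst p) * e (snd p))" for \<gamma>
  have img: "(\<lambda>p. fst p + snd p) ` P \<subseteq> mindices (i + j)"
    by (auto simp: P_def mindices_def mdeg_add)
  have "f x * g x = (\<Sum>\<gamma>\<in>mindices (i+j). h \<gamma> * mono x \<gamma>)" for x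
  proof -
    have "f x * g x = (\<Sum>\<alpha>\<in>mindices i. \<Sum>\<beta>\<in>mindices j. (c \<alpha> * mono x \<alpha>) * (e \<beta> * mono x \<beta>))"
      by (simp add: c e sum_product)
    also have "\<dots> = (\<Sum>p\<in>P. c (fst p) * e (snd p) * mono x (fst p + snd p))"
      unfolding P_def sum.cartesian_product by (intro sum.cong) (auto simp: mono_add)
    also have "\<dots> = (\<Sum>\<gamma>\<in>mindices (i+j). \<Sum>p\<in>{p\<in>P. fst p + snd p = \<gamma>}. c (fst p) * e (snd p) * mono x (fst p + snd p))"
      by (rule sum.group[where h="\<lambda>p. c (fst p) * e (snd p) * mono x (fst p + snd p)", OF fP finite_mindices img, symmetric])
    also have "\<dots> = (\<Sum>\<gamma>\<in>mindices (i+j). h \<gamma> * mono x \<gamma>)"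
      unfolding h_def sum_distrib_right by (intro sum.cong refl) auto
    finally show ?thesis .
  qed
  then show ?thesis unfolding polyfun_def by (intro exI[of _ h]) blast
qed

lemma polyfun_pow:
  assumes "polyfun i f" shows "polyfun (i * k) (\<lambda>x. f x ^ k)"
proof (induction k)
  case 0
  then show ?case using polyfun_const[of 0 1] by simp
next
  case (Suc k)
  have "polyfun (i + i * k) (\<lambda>x. f x * f x ^ k)"
    by (rule polyfun_mult[OF assms Suc])
  then show ?case by simp
qed

lemma polyfun_prod:
  assumes "finite S" "\<And>i. i \<in> S \<Longrightarrow> polyfun (dg i) (f i)"
  shows "polyfun (\<Sum>i\<in>S. dg i) (\<lambda>x. \<Prod>i\<in>S. f i x)"
  using assms
proof (induction S rule: finite_induct)
  case empty
  then show ?case using polyfun_const[of 0 1] by simp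
next
  case (insert a S)
  then show ?case using polyfun_mult[of "dg a" "f a" "\<Sum>i\<in>S. dg i"] by simp
qed

lemma polyfun_coord: "polyfun 1 (\<lambda>x. x $ i)"
proof -
  define \<alpha> where "\<alpha> = (\<lambda>k. if k = i then 1 else (0::nat))"
  have "mono x \<alpha> = x $ i" for x
  proof -
    have "mono x \<alpha> = (\<Prod>k\<in>UNIV. if k = i then x $ i else 1)"
      unfolding mono_def \<alpha>_def by (intro prod.cong) auto
    then show ?thesis by simp
  qed
  moreover have "mdeg \<alpha> \<le> 1" unfolding mdeg_def \<alpha>_def by simp
  ultimately show ?thesis using polyfun_monomial[of \<alpha> 1] by simp
qed

lemma polyfun_affine:
  fixes L :: "real^'n::finite \<Rightarrow> real^'n"
  assumes "linear L" "polyfun j f"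
  shows "polyfun j (\<lambda>x. f (b + L x))"
proof -
  obtain c where c: "\<And>x. f x = (\<Sum>\<alpha>\<in>mindices j. c \<alpha> * mono x \<alpha>)"
    using assms unfolding polyfun_def by metis
  have coord: "polyfun 1 (\<lambda>x. (b + L x) $ i)" for i
  proof -
    have eqx: "(b + L x) $ i = b $ i + (\<Sum>l\<in>UNIV. L (axis l 1) $ i * x $ l)" for x
    proof -
      have be: "(\<Sum>l\<in>UNIV. x $ l *\<^sub>R axis l 1) = x"
        using basis_expansion[of x] by (simp only: scalar_mult_eq_scaleR)
      have "L x = L (\<Sum>l\<in>UNIV. x $ l *\<^sub>R axis l 1)"
        by (simp only: be)
      also have "\<dots> = (\<Sum>l\<in>UNIV. x $ l *\<^sub>R L (axis l 1))"
        by (simp only: linear_sum[OF assms(1)] linear_scale[OF assms(1)] o_def)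
      finally have e: "L x = (\<Sum>l\<in>UNIV. x $ l *\<^sub>R L (axis l 1))" .
      have "(b + L x) $ i = b $ i + (\<Sum>l\<in>UNIV. (x $ l *\<^sub>R L (axis l 1)) $ i)"
        unfolding e by (simp only: vector_add_component sum_component)
      also have "\<dots> = b $ i + (\<Sum>l\<in>UNIV. L (axis l 1) $ i * x $ l)"
        by (simp only: vector_scaleR_component real_scaleR_def mult.commute)
      finally show ?thesis .
    qed
    moreover have "polyfun 1 (\<lambda>x. b $ i + (\<Sum>l\<in>UNIV. L (axis l 1) $ i * x $ l))"
      apply (rule polyfun_add[OF polyfun_const])
      apply (rule polyfun_sum)
       apply simp
      apply (rule polyfun_cmult)
      apply (rule polyfun_coord)
      done
    moreover have "(\<lambda>x. (b + L x) $ i) = (\<lambda>x. b $ i + (\<Sum>l\<in>UNIV. L (axis l 1) $ i * x $ l))"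
      by (rule ext) (rule eqx)
    ultimately show ?thesis by (simp only:)
  qed
  have m: "polyfun (mdeg \<alpha>) (\<lambda>x. mono (b + L x) \<alpha>)" for \<alpha>
  proof -
    have "polyfun (\<Sum>i\<in>UNIV. 1 * \<alpha> i) (\<lambda>x. \<Prod>i\<in>UNIV. ((b + L x) $ i) ^ \<alpha> i)"
      apply (rule polyfun_prod)
       apply simp
      apply (rule polyfun_pow[OF coord])
      done
    then show ?thesis by (simp add: mono_def mdeg_def)
  qed
  have "polyfun j (\<lambda>x. \<Sum>\<alpha>\<in>mindices j. c \<alpha> * mono (b + L x) \<alpha>)"
    apply (rule polyfun_sum[OF finite_mindices])
    apply (rule polyfun_cmult)
    apply (rule polyfun_mono_deg[OF m])
    apply (simp add: mindices_def)
    done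
  then show ?thesis by (simp add: c)
qed

lemma mono_upd_split:
  fixes x :: "real^'n::finite"
  shows "mono (\<chi> i. if i = j then t else x $ i) \<alpha> = t ^ \<alpha> j * mono x (\<alpha>(j := 0))"
proof -
  have "mono (\<chi> i. if i = j then t else x $ i) \<alpha> = t ^ \<alpha> j * (\<Prod>i\<in>UNIV - {j}. x $ i ^ \<alpha> i)"
    unfolding mono_def by (subst prod.remove[of UNIV j]) (auto intro!: prod.cong)
  moreover have "mono x (\<alpha>(j := 0)) = (\<Prod>i\<in>UNIV - {j}. x $ i ^ \<alpha> i)"
    unfolding mono_def by (subst prod.remove[of UNIV j]) (auto intro!: prod.cong)
  ultimately show ?thesis by simp
qed

lemma ident_aux:
  fixes S :: "('n::finite) set"
  assumes "finite S"
  shows "\<And>F (c :: 'n mindex \<Rightarrow> real). finite F \<Longrightarrow> (\<forall>\<alpha>\<in>F. \<forall>i. i \<notin> S \<longrightarrow> \<alpha> i = 0) \<Longrightarrow>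
     (\<forall>x::real^'n. (\<Sum>\<alpha>\<in>F. c \<alpha> * mono x \<alpha>) = 0) \<Longrightarrow> \<forall>\<alpha>\<in>F. c \<alpha> = 0"
  using assms
proof (induction S rule: finite_induct)
  case empty
  fix F and c :: "'n mindex \<Rightarrow> real"
  assume fF: "finite F" and z: "\<forall>\<alpha>\<in>F. \<forall>i. i \<notin> {} \<longrightarrow> \<alpha> i = 0"
    and s: "\<forall>x::real^'n. (\<Sum>\<alpha>\<in>F. c \<alpha> * mono x \<alpha>) = 0"
  have F0: "F \<subseteq> {\<lambda>_. 0}" using z by auto
  show "\<forall>\<alpha>\<in>F. c \<alpha> = 0"
  proof
    fix \<alpha> assume a: "\<alpha> \<in> F"
    then have "F = {\<lambda>_. 0}" "\<alpha> = (\<lambda>_. 0)" using F0 by auto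
    then show "c \<alpha> = 0" using s by (simp add: mono_zero_idx)
  qed
next
  case (insert j S)
  fix F and c :: "'n mindex \<Rightarrow> real"
  assume fF: "finite F" and z: "\<forall>\<alpha>\<in>F. \<forall>i. i \<notin> insert j S \<longrightarrow> \<alpha> i = 0"
    and s: "\<forall>x::real^'n. (\<Sum>\<alpha>\<in>F. c \<alpha> * mono x \<alpha>) = 0"
  define K where "K = Max (insert 0 ((\<lambda>\<alpha>. \<alpha> j) ` F))"
  have K: "\<alpha> \<in> F \<Longrightarrow> \<alpha> j \<le> K" for \<alpha> unfolding K_def using fF by (intro Max_ge) auto
  define a where "a k x = (\<Sum>\<alpha>\<in>{\<alpha>\<in>F. \<alpha> j = k}. c \<alpha> * mono x (\<alpha>(j := 0)))" for k x
  have a0: "a k x = 0" if "k \<le> K" for k x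
  proof -
    have "(\<Sum>k\<le>K. a k x * t ^ k) = 0" for t
    proof -
      have "0 = (\<Sum>\<alpha>\<in>F. c \<alpha> * mono (\<chi> i. if i = j then t else x $ i) \<alpha>)" using s by simp
      also have "\<dots> = (\<Sum>\<alpha>\<in>F. c \<alpha> * (t ^ \<alpha> j * mono x (\<alpha>(j := 0))))"
        by (simp add: mono_upd_split)
      also have "\<dots> = (\<Sum>k\<le>K. \<Sum>\<alpha>\<in>{\<alpha>\<in>F. \<alpha> j = k}. c \<alpha> * (t ^ \<alpha> j * mono x (\<alpha>(j := 0))))"
        using K by (intro sum.group[symmetric] fF) auto
      also have "\<dots> = (\<Sum>k\<le>K. a k x * t ^ k)"
        unfolding a_def sum_distrib_right by (intro sum.cong refl) (auto simp: algebra_simps)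
      finally show ?thesis by simp
    qed
    then show ?thesis using polyfun_eq_0[of "\<lambda>k. a k x" K] that by auto
  qed
  show "\<forall>\<alpha>\<in>F. c \<alpha> = 0"
  proof
    fix \<alpha> assume aF: "\<alpha> \<in> F"
    define k where "k = \<alpha> j"
    define G where "G = {\<alpha>\<in>F. \<alpha> j = k}"
    define Fk where "Fk = (\<lambda>\<alpha>. \<alpha>(j := 0)) ` G"
    define ck where "ck \<beta> = c (\<beta>(j := k))" for \<beta>
    have inj: "inj_on (\<lambda>\<alpha>. \<alpha>(j := 0)) G"
    proof (rule inj_onI)
      fix u v assume "u \<in> G" "v \<in> G" "u(j := 0) = v(j := 0)"
      then have "u j = v j" unfolding G_def by simp
      then show "u = v" using \<open>u(j := 0) = v(j := 0)\<close> by (metis fun_upd_triv fun_upd_upd)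
    qed
    have "\<forall>\<beta>\<in>Fk. ck \<beta> = 0"
    proof (rule insert.IH)
      show "finite Fk" unfolding Fk_def G_def using fF by simp
      show "\<forall>\<beta>\<in>Fk. \<forall>i. i \<notin> S \<longrightarrow> \<beta> i = 0"
        using z unfolding Fk_def G_def by auto
      show "\<forall>x::real^'n. (\<Sum>\<beta>\<in>Fk. ck \<beta> * mono x \<beta>) = 0"
      proof
        fix x :: "real^'n"
        have "(\<Sum>\<beta>\<in>Fk. ck \<beta> * mono x \<beta>) = (\<Sum>\<alpha>\<in>G. ck (\<alpha>(j := 0)) * mono x (\<alpha>(j := 0)))"
          unfolding Fk_def by (rule sum.reindex[OF inj, unfolded o_def])
        also have "\<dots> = a k x"
          unfolding a_def G_def ck_def by (intro sum.cong refl) (simp add: fun_upd_idem)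
        also have "\<dots> = 0" using a0 K aF k_def by simp
        finally show "(\<Sum>\<beta>\<in>Fk. ck \<beta> * mono x \<beta>) = 0" .
      qed
    qed
    moreover have "\<alpha>(j := 0) \<in> Fk" unfolding Fk_def G_def k_def using aF by auto
    ultimately have "c ((\<alpha>(j := 0))(j := \<alpha> j)) = 0" unfolding ck_def k_def by blast
    then show "c \<alpha> = 0" by simp
  qed
qed

lemma poly_ident:
  fixes c :: "('n::finite) mindex \<Rightarrow> real"
  assumes "\<forall>x::real^'n. (\<Sum>\<alpha>\<in>mindices d. c \<alpha> * mono x \<alpha>) = 0"
  shows "\<forall>\<alpha>\<in>mindices d. c \<alpha> = 0"
  using ident_aux[OF finite_class.finite_UNIV finite_mindices, of d c] assms by simp

interpretation fvs: vector_space "\<lambda>(r::real) (f::'a \<Rightarrow> real). (\<lambda>x. r * f x)"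
  by unfold_locales (auto simp: fun_eq_iff algebra_simps plus_fun_def)

lemma sum_fun_apply': "(sum f S) x = (\<Sum>i\<in>S. f i x :: real)"
  by (induction S rule: infinite_finite_induct) auto

lemma fvs_sum_apply: "(\<Sum>v\<in>T. (\<lambda>x. u v * v x)) y = (\<Sum>v\<in>T. u v * v y :: real)"
  by (subst sum_fun_apply') simp

lemma unit_expand:
  assumes "finite M" "\<forall>\<alpha>. \<alpha> \<notin> M \<longrightarrow> \<zeta> \<alpha> = 0"
  shows "\<zeta> = (\<Sum>\<alpha>\<in>M. (\<lambda>x. \<zeta> \<alpha> * (if x = \<alpha> then 1 else (0::real))))"
proof
  fix y
  have "(\<Sum>\<alpha>\<in>M. (\<lambda>x. \<zeta> \<alpha> * (if x = \<alpha> then 1 else (0::real)))) y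
      = (\<Sum>\<alpha>\<in>M. \<zeta> \<alpha> * (if y = \<alpha> then 1 else 0))"
    by (subst sum_fun_apply') simp
  also have "\<dots> = (\<Sum>\<alpha>\<in>M. if y = \<alpha> then \<zeta> \<alpha> else 0)"
    by (intro sum.cong) auto
  also have "\<dots> = \<zeta> y" using assms by (simp add: sum.delta)
  finally show "\<zeta> y = (\<Sum>\<alpha>\<in>M. (\<lambda>x. \<zeta> \<alpha> * (if x = \<alpha> then 1 else (0::real)))) y" by simp
qed

lemma vanish_span:
  fixes B :: "('a \<Rightarrow> real) set"
  assumes "\<forall>b\<in>B. (\<Sum>\<alpha>\<in>M. c \<alpha> * b \<alpha>) = 0" "\<zeta> \<in> fvs.span B"
  shows "(\<Sum>\<alpha>\<in>M. c \<alpha> * \<zeta> \<alpha>) = 0"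
proof -
  have "fvs.subspace {\<zeta>. (\<Sum>\<alpha>\<in>M. c \<alpha> * \<zeta> \<alpha>) = 0}"
  proof (unfold fvs.subspace_def, intro conjI ballI allI)
    show "(0::'a\<Rightarrow>real) \<in> {\<zeta>. (\<Sum>\<alpha>\<in>M. c \<alpha> * \<zeta> \<alpha>) = 0}" by simp
    fix x y :: "'a \<Rightarrow> real" assume "x \<in> {\<zeta>. (\<Sum>\<alpha>\<in>M. c \<alpha> * \<zeta> \<alpha>) = 0}" "y \<in> {\<zeta>. (\<Sum>\<alpha>\<in>M. c \<alpha> * \<zeta> \<alpha>) = 0}"
    then show "x + y \<in> {\<zeta>. (\<Sum>\<alpha>\<in>M. c \<alpha> * \<zeta> \<alpha>) = 0}"
      by (simp add: distrib_left sum.distrib)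
  next
    fix r :: real and x :: "'a \<Rightarrow> real" assume "x \<in> {\<zeta>. (\<Sum>\<alpha>\<in>M. c \<alpha> * \<zeta> \<alpha>) = 0}"
    have "(\<Sum>\<alpha>\<in>M. c \<alpha> * (r * x \<alpha>)) = r * (\<Sum>\<alpha>\<in>M. c \<alpha> * x \<alpha>)"
      by (simp add: sum_distrib_left algebra_simps)
    then show "(\<lambda>y. r * x y) \<in> {\<zeta>. (\<Sum>\<alpha>\<in>M. c \<alpha> * \<zeta> \<alpha>) = 0}"
      using \<open>x \<in> _\<close> by simp
  qed
  then show ?thesis
    using fvs.span_induct[OF assms(2), of "\<lambda>\<zeta>. (\<Sum>\<alpha>\<in>M. c \<alpha> * \<zeta> \<alpha>) = 0"] assms(1) by blast
qed

lemma span_full: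
  fixes M :: "'a set" and Z :: "('a \<Rightarrow> real) set"
  assumes fM: "finite M" and ZM: "\<forall>\<zeta>\<in>Z. \<forall>\<alpha>. \<alpha> \<notin> M \<longrightarrow> \<zeta> \<alpha> = 0"
    and nondeg: "\<forall>c. (\<forall>\<zeta>\<in>Z. (\<Sum>\<alpha>\<in>M. c \<alpha> * \<zeta> \<alpha>) = 0) \<longrightarrow> (\<forall>\<alpha>\<in>M. c \<alpha> = 0)"
    and xiM: "\<forall>\<alpha>. \<alpha> \<notin> M \<longrightarrow> \<xi> \<alpha> = 0"
  shows "\<exists>F u. finite F \<and> F \<subseteq> Z \<and> card F \<le> card M \<and> \<xi> = (\<lambda>\<alpha>. \<Sum>v\<in>F. u v * v \<alpha>)"
proof -
  define e where "e \<alpha> = (\<lambda>x. if x = \<alpha> then 1 else (0::real))" for \<alpha> :: 'a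
  define U where "U = e ` M"
  have fU: "finite U" "card U \<le> card M" unfolding U_def using fM by (auto intro: card_image_le)
  have spanU: "\<zeta> \<in> fvs.span U" if "\<forall>\<alpha>. \<alpha> \<notin> M \<longrightarrow> \<zeta> \<alpha> = 0" for \<zeta>
  proof -
    have mem: "(\<Sum>\<alpha>\<in>M. (\<lambda>x. \<zeta> \<alpha> * (if x = \<alpha> then 1 else (0::real)))) \<in> fvs.span U"
    proof (rule fvs.span_sum)
      fix \<alpha> assume "\<alpha> \<in> M"
      then have "e \<alpha> \<in> U" by (simp add: U_def)
      from fvs.span_scale[OF fvs.span_base[OF this], of "\<zeta> \<alpha>"]
      show "(\<lambda>x. \<zeta> \<alpha> * (if x = \<alpha> then 1 else (0::real))) \<in> fvs.span U" by (simp add: e_def)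
    qed
    show ?thesis by (subst unit_expand[OF fM that]) (rule mem)
  qed
  obtain B where BZ: "B \<subseteq> Z" and indB: "fvs.independent B" and ZB: "Z \<subseteq> fvs.span B"
    by (rule fvs.maximal_independent_subset)
  have BU: "B \<subseteq> fvs.span U" using BZ ZM spanU by blast
  then have fB: "finite B" "card B \<le> card U" using fvs.independent_span_bound[OF fU(1) indB] by auto
  have contra: False if c: "\<forall>b\<in>B. (\<Sum>\<alpha>\<in>M. c \<alpha> * b \<alpha>) = 0" "\<alpha>0 \<in> M" "c \<alpha>0 \<noteq> 0" for c \<alpha>0
  proof -
    have "\<forall>\<zeta>\<in>Z. (\<Sum>\<alpha>\<in>M. c \<alpha> * \<zeta> \<alpha>) = 0" using vanish_span[OF c(1)] ZB by blast
    then show False using nondeg c by blast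
  qed
  have allspan: "\<xi> \<in> fvs.span B"
  proof (rule ccontr)
    assume nx: "\<xi> \<notin> fvs.span B"
    have "fvs.independent (insert \<xi> B)" using nx indB by (rule fvs.independent_insertI)
    moreover have "insert \<xi> B \<subseteq> fvs.span U" using BU spanU[OF xiM] by blast
    ultimately have "card (insert \<xi> B) \<le> card U" using fvs.independent_span_bound[OF fU(1)] by blast
    moreover have "\<xi> \<notin> B" using nx fvs.span_base by blast
    ultimately have cB: "card B < card M" using fB fU by simp
    define g where "g \<alpha> = (\<lambda>b. if b \<in> B then b \<alpha> else (0::real))" for \<alpha>
    define U' where "U' = (\<lambda>b. (\<lambda>x. if x = b then 1 else (0::real))) ` B"
    have fU': "finite U'" "card U' \<le> card B" unfolding U'_def using fB by (auto intro: card_image_le)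
    have gU': "g \<alpha> \<in> fvs.span U'" for \<alpha>
    proof -
      have mem: "(\<Sum>b\<in>B. (\<lambda>x. g \<alpha> b * (if x = b then 1 else (0::real)))) \<in> fvs.span U'"
      proof (rule fvs.span_sum)
        fix b assume "b \<in> B"
        then have "(\<lambda>x. if x = b then 1 else (0::real)) \<in> U'" by (simp add: U'_def)
        from fvs.span_scale[OF fvs.span_base[OF this], of "g \<alpha> b"]
        show "(\<lambda>x. g \<alpha> b * (if x = b then 1 else (0::real))) \<in> fvs.span U'" by simp
      qed
      have z: "\<forall>b. b \<notin> B \<longrightarrow> g \<alpha> b = 0" by (simp add: g_def)
      show ?thesis by (subst unit_expand[OF fB(1) z]) (rule mem)
    qed
    show False
    proof (cases "inj_on g M")
      case False
      then obtain a1 a2 where a: "a1 \<in> M" "a2 \<in> M" "a1 \<noteq> a2" "g a1 = g a2"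
        unfolding inj_on_def by blast
      define c where "c \<beta> = (if \<beta> = a1 then 1 else 0) - (if \<beta> = a2 then 1 else (0::real))" for \<beta>
      have "\<forall>b\<in>B. (\<Sum>\<alpha>\<in>M. c \<alpha> * b \<alpha>) = 0"
      proof
        fix b assume bB: "b \<in> B"
        have "(\<Sum>\<alpha>\<in>M. c \<alpha> * b \<alpha>) = (\<Sum>\<alpha>\<in>M. (if \<alpha> = a1 then b \<alpha> else 0) - (if \<alpha> = a2 then b \<alpha> else 0))"
          unfolding c_def by (intro sum.cong) auto
        also have "\<dots> = b a1 - b a2"
          using a fM by (simp add: sum_subtractf sum.delta')
        also have "\<dots> = 0" using fun_cong[OF a(4), of b] bB by (simp add: g_def)
        finally show "(\<Sum>\<alpha>\<in>M. c \<alpha> * b \<alpha>) = 0" .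
      qed
      then show False using contra[of c a1] a by (simp add: c_def)
    next
      case True
      have "\<not> fvs.independent (g ` M)"
      proof
        assume "fvs.independent (g ` M)"
        moreover have "g ` M \<subseteq> fvs.span U'" using gU' by blast
        ultimately have "card (g ` M) \<le> card U'" using fvs.independent_span_bound[OF fU'(1)] by blast
        then show False using card_image[OF True] cB fU' by simp
      qed
      then obtain T u where T: "finite T" "T \<subseteq> g ` M" "(\<Sum>v\<in>T. (\<lambda>x. u v * v x)) = 0"
        and v: "\<exists>v\<in>T. u v \<noteq> 0"
        unfolding fvs.dependent_explicit by blast
      define c where "c \<alpha> = (if g \<alpha> \<in> T then u (g \<alpha>) else 0)" for \<alpha>
      define MT where "MT = {\<alpha>\<in>M. g \<alpha> \<in> T}"
      have gMT: "g ` MT = T" unfolding MT_def using T(2) by auto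
      have injMT: "inj_on g MT" using True unfolding MT_def by (rule inj_on_subset) auto
      have "\<forall>b\<in>B. (\<Sum>\<alpha>\<in>M. c \<alpha> * b \<alpha>) = 0"
      proof
        fix b assume bB: "b \<in> B"
        have "(\<Sum>\<alpha>\<in>M. c \<alpha> * b \<alpha>) = (\<Sum>\<alpha>\<in>MT. u (g \<alpha>) * g \<alpha> b)"
          unfolding c_def MT_def using fM bB
          by (intro sum.mono_neutral_cong_right) (auto simp: g_def)
        also have "\<dots> = (\<Sum>v\<in>T. u v * v b)"
          using sum.reindex[OF injMT, of "\<lambda>v. u v * v b"] gMT by simp
        also have "\<dots> = (\<Sum>v\<in>T. (\<lambda>x. u v * v x)) b" by (rule fvs_sum_apply[symmetric])
        also have "\<dots> = 0" using T(3) by simp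
        finally show "(\<Sum>\<alpha>\<in>M. c \<alpha> * b \<alpha>) = 0" .
      qed
      moreover obtain v0 where "v0 \<in> T" "u v0 \<noteq> 0" using v by blast
      moreover then obtain a0 where "a0 \<in> M" "g a0 = v0" using T(2) by blast
      ultimately show False using contra[of c a0] by (simp add: c_def)
    qed
  qed
  obtain u where "\<xi> = (\<Sum>v\<in>B. (\<lambda>x. u v * v x))"
    using allspan fvs.span_finite[OF fB(1)] by blast
  then have "\<xi> = (\<lambda>\<alpha>. \<Sum>v\<in>B. u v * v \<alpha>)" by (auto simp: fun_eq_iff fvs_sum_apply)
  then show ?thesis using fB fU BZ by (intro exI[of _ B] exI[of _ u]) auto
qed

lemma card_mindices_le: "card (mindices d :: ('n::finite) mindex set) \<le> Ndim CARD('n) d"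
proof -
  obtain es :: "'n list" where es: "distinct es" "set es = UNIV"
    using finite_distinct_list[OF finite_class.finite_UNIV] by blast
  have les: "length es = CARD('n)" using distinct_card[OF es(1)] es(2) by simp
  define f where "f \<alpha> = map \<alpha> es @ [d - mdeg \<alpha>]" for \<alpha> :: "'n mindex"
  define B where "B = {l::nat list. size l = CARD('n) + 1 \<and> sum_list l = d}"
  have sl: "sum_list (map \<alpha> es) = mdeg \<alpha>" for \<alpha> :: "'n mindex"
    using sum_list_distinct_conv_sum_set[OF es(1)] es(2) by (simp add: mdeg_def)
  have inj: "inj_on f (mindices d)"
  proof (rule inj_onI)
    fix \<alpha> \<beta> assume "\<alpha> \<in> mindices d" "\<beta> \<in> mindices d" "f \<alpha> = f \<beta>"
    then have "map \<alpha> es = map \<beta> es" unfolding f_def by simp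
    then show "\<alpha> = \<beta>" using es(2) by (auto simp: fun_eq_iff map_eq_conv)
  qed
  have img: "f ` mindices d \<subseteq> B"
    unfolding B_def f_def using les sl by (auto simp: mindices_def)
  have fB: "finite B"
  proof (rule finite_subset)
    show "B \<subseteq> {xs. set xs \<subseteq> {..d} \<and> length xs = CARD('n) + 1}"
      unfolding B_def using member_le_sum_list by fastforce
    show "finite {xs. set xs \<subseteq> {..d} \<and> length xs = CARD('n) + 1}"
      by (rule finite_lists_length_eq) simp
  qed
  have "card (mindices d :: 'n mindex set) \<le> card B"
    by (rule card_inj_on_le[OF inj img fB])
  also have "card B = (d + (CARD('n) + 1) - 1) choose d"
    unfolding B_def by (rule card_length_sum_list)
  also have "\<dots> = Ndim CARD('n) d" by (simp add: Ndim_def add.commute)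
  finally show ?thesis .
qed

lemma shifted_expand:
  fixes a x :: "real^'n::finite"
  assumes aM: "\<alpha> \<in> mindices d"
  shows "(\<Sum>\<beta>\<in>mindices d. shifted_mono a \<alpha> \<beta> * mono x \<beta>) = mono (x - a) \<alpha>"
proof -
  define Box where "Box = PiE (UNIV::'n set) (\<lambda>i. {..\<alpha> i})"
  have BoxM: "Box \<subseteq> mindices d"
  proof
    fix \<beta> assume "\<beta> \<in> Box"
    then have "\<forall>i. \<beta> i \<le> \<alpha> i" by (auto simp: Box_def PiE_UNIV_domain)
    then have "mdeg \<beta> \<le> mdeg \<alpha>" unfolding mdeg_def by (intro sum_mono) auto
    then show "\<beta> \<in> mindices d" using aM by (simp add: mindices_def)
  qed
  have inBox: "\<beta> \<in> Box \<longleftrightarrow> (\<forall>i. \<beta> i \<le> \<alpha> i)" for \<beta>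
    by (auto simp: Box_def PiE_UNIV_domain)
  have "mono (x - a) \<alpha> = (\<Prod>i\<in>UNIV. (x $ i + (- a $ i)) ^ \<alpha> i)"
    by (simp add: mono_def)
  also have "\<dots> = (\<Prod>i\<in>UNIV. \<Sum>b\<le>\<alpha> i. real (\<alpha> i choose b) * x $ i ^ b * (- a $ i) ^ (\<alpha> i - b))"
    by (simp only: binomial_ring)
  also have "\<dots> = (\<Sum>\<beta>\<in>Box. \<Prod>i\<in>UNIV. real (\<alpha> i choose \<beta> i) * x $ i ^ \<beta> i * (- a $ i) ^ (\<alpha> i - \<beta> i))"
    unfolding Box_def by (rule prod_sum_PiE) auto
  also have "\<dots> = (\<Sum>\<beta>\<in>Box. shifted_mono a \<alpha> \<beta> * mono x \<beta>)"
  proof (rule sum.cong[OF refl])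
    fix \<beta> assume "\<beta> \<in> Box"
    then have "\<forall>i. \<beta> i \<le> \<alpha> i" using inBox by blast
    then show "(\<Prod>i\<in>UNIV. real (\<alpha> i choose \<beta> i) * x $ i ^ \<beta> i * (- a $ i) ^ (\<alpha> i - \<beta> i)) = shifted_mono a \<alpha> \<beta> * mono x \<beta>"
      by (simp add: shifted_mono_def mono_def prod.distrib[symmetric] algebra_simps)
  qed
  also have "\<dots> = (\<Sum>\<beta>\<in>mindices d. shifted_mono a \<alpha> \<beta> * mono x \<beta>)"
    using BoxM finite_mindices inBox
    by (intro sum.mono_neutral_left) (auto simp: shifted_mono_def)
  finally show ?thesis by simp
qed

lemma dapply_delta_shifted:
  fixes a :: "real^'n::finite"
  assumes aM: "\<alpha> \<in> mindices d"
  shows "dapply d (\<lambda>\<beta>. t * delta d a \<beta>) (shifted_mono a \<alpha>) = (if \<alpha> = (\<lambda>_. 0) then t else 0)"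
proof -
  have "dapply d (\<lambda>\<beta>. t * delta d a \<beta>) (shifted_mono a \<alpha>) = t * (\<Sum>\<beta>\<in>mindices d. shifted_mono a \<alpha> \<beta> * mono a \<beta>)"
    unfolding dapply_def delta_def sum_distrib_left by (intro sum.cong) auto
  also have "\<dots> = t * mono 0 \<alpha>" using shifted_expand[OF aM, of a a] by simp
  also have "mono (0::real^'n) \<alpha> = (if \<alpha> = (\<lambda>_. 0) then 1 else 0)"
  proof (cases "\<alpha> = (\<lambda>_. 0)")
    case True then show ?thesis by (simp add: mono_def)
  next
    case False
    then obtain i where "\<alpha> i \<noteq> 0" by auto
    then have "(0::real) ^ \<alpha> i = 0" by simp
    then have "mono (0::real^'n) \<alpha> = 0" unfolding mono_def
      by (intro prod_zero) auto
    then show ?thesis using False by simp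
  qed
  finally show ?thesis by simp
qed

lemma DeltaE_mono: "E \<subseteq> E' \<Longrightarrow> DeltaE X d N E \<subseteq> DeltaE X d N E'"
  unfolding DeltaE_def fibre_def by blast

lemma Eprime_mono: "E \<subseteq> E' \<Longrightarrow> Eprime X d N E \<subseteq> Eprime X d N E'"
  unfolding Eprime_def using closure_mono[OF DeltaE_mono] by blast

lemma delta_in_dual: "delta d a \<in> dual_space d"
  by (simp add: delta_def dual_space_def)

lemma delta_in_Eprime:
  fixes a :: "real^'n::finite"
  assumes aX: "a \<in> X" and E0: "Eseq X d N 0 \<subseteq> E"
  shows "(a, delta d a) \<in> Eprime X d N E"
proof -
  have d1: "delta d a = (\<lambda>\<alpha>. 1 * delta d a \<alpha>)" by simp
  have "(a, delta d a) \<in> Eseq X d N 0" using aX d1 by (auto intro!: exI[of _ 1])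
  then have "(a, delta d a) \<in> E" using E0 by blast
  then have f1: "delta d a \<in> fibre E a" by (simp add: fibre_def)
  have "(a, (\<lambda>\<alpha>. 0 * delta d a \<alpha>)) \<in> Eseq X d N 0" using aX by (auto intro!: exI[of _ 0])
  then have "(a, (\<lambda>\<alpha>. 0 * delta d a \<alpha>)) \<in> E" using E0 by blast
  then have f0: "(\<lambda>_. 0) \<in> fibre E a" by (simp add: fibre_def)
  define as where "as = (\<lambda>i. if i \<le> N then a else (0::real^'n))"
  define xis where "xis = (\<lambda>i::nat. if i = 0 then delta d a else (\<lambda>_. 0::real))"
  have "(as, delta d a) \<in> DeltaE X d N E"
    unfolding DeltaE_def
  proof (intro CollectI exI conjI allI impI ballI)
    show "(as, delta d a) = (as, delta d a)" by simp
    fix i assume iN: "i \<le> N"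
    show "as i \<in> X" using aX iN by (simp add: as_def)
    show "xis i \<in> fibre E (as i)" using f0 f1 iN by (simp add: as_def xis_def)
    fix \<alpha> :: "'n mindex" assume aM: "\<alpha> \<in> mindices d"
    have "\<bar>dapply d (xis i) (shifted_mono (as i) \<alpha>)\<bar> \<le> 1"
    proof (cases "i = 0")
      case True
      then show ?thesis using dapply_delta_shifted[OF aM, of 1 "as i"]
        by (simp add: xis_def as_def)
    next
      case False
      then show ?thesis by (simp add: xis_def dapply_def)
    qed
    moreover have "norm (as i - as 0) ^ (d - mdeg \<alpha>) \<le> 1"
      using iN by (simp add: as_def power_0_left)
    ultimately show "norm (as i - as 0) ^ (d - mdeg \<alpha>) * \<bar>dapply d (xis i) (shifted_mono (as i) \<alpha>)\<bar> \<le> 1"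
      by (simp add: mult_le_one)
  next
    fix i :: nat assume "i > N" then show "as i = 0" by (simp add: as_def)
  next
    show "delta d a = (\<lambda>\<alpha>. \<Sum>i\<le>N. xis i \<alpha>)"
    proof (rule ext)
      fix \<alpha>
      have "(\<Sum>i\<le>N. xis i \<alpha>) = (\<Sum>i\<le>N. if i = 0 then delta d a \<alpha> else 0)"
        by (intro sum.cong) (auto simp: xis_def)
      also have "\<dots> = delta d a \<alpha>" by (simp add: sum.delta)
      finally show "delta d a \<alpha> = (\<Sum>i\<le>N. xis i \<alpha>)" by simp
    qed
  qed
  then have "(as, delta d a) \<in> closure (DeltaE X d N E)" using closure_subset by blast
  then show ?thesis unfolding Eprime_def as_def using aX by simp
qed

lemma Eseq0_sub: "Eseq X d N 0 \<subseteq> Eseq X d N k"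
proof (induction k)
  case 0 then show ?case by simp
next
  case (Suc k)
  show ?case
  proof
    fix p assume "p \<in> Eseq X d N 0"
    then obtain a t where p: "p = (a, (\<lambda>\<alpha>. t * delta d a \<alpha>))" "a \<in> X" by auto
    have "(a, delta d a) \<in> Eprime X d N (Eseq X d N k)"
      by (rule delta_in_Eprime[OF p(2) Suc.IH])
    then have "delta d a \<in> fibre (Eprime X d N (Eseq X d N k)) a" by (simp add: fibre_def)
    then have "(\<lambda>\<alpha>. t * delta d a \<alpha>) \<in> fspan (fibre (Eprime X d N (Eseq X d N k)) a)"
      unfolding fspan_def by (intro CollectI exI[of _ "{delta d a}"] exI[of _ "\<lambda>_. t"]) auto
    then show "p \<in> Eseq X d N (Suc k)" using p by simp
  qed
qed

lemma closed_dual_pairs: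
  "closed {p :: ('x::topological_space) \<times> ('b::finite mindex \<Rightarrow> real). snd p \<in> dual_space d}"
proof -
  have "{p :: 'x \<times> ('b::finite mindex \<Rightarrow> real). snd p \<in> dual_space d} = (\<Inter>\<alpha>\<in>-mindices d. {p. snd p \<alpha> = 0})"
    by (auto simp: dual_space_def)
  moreover have "closed {p :: 'x \<times> ('b::finite mindex \<Rightarrow> real). snd p \<alpha> = 0}" for \<alpha>
  proof -
    have "continuous_on UNIV (\<lambda>p :: 'x \<times> ('b::finite mindex \<Rightarrow> real). snd p \<alpha>)"
      by (rule continuous_on_compose2[OF continuous_on_product_coordinates continuous_on_snd]) auto
    then show ?thesis using closed_Collect_eq[OF _ continuous_on_const, of "\<lambda>p :: 'x \<times> ('b::finite mindex \<Rightarrow> real). snd p \<alpha>" 0]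
      by simp
  qed
  ultimately show ?thesis by auto
qed

lemma fspan_sub_dual: "S \<subseteq> dual_space d \<Longrightarrow> fspan S \<subseteq> dual_space d"
  unfolding fspan_def dual_space_def by (force intro!: sum.neutral)

lemma Eseq_dual: "(a, \<xi>) \<in> Eseq X d N k \<Longrightarrow> \<xi> \<in> dual_space d"
proof (induction k arbitrary: a \<xi>)
  case 0 then show ?case by (auto simp: dual_space_def delta_def)
next
  case (Suc k)
  have D: "DeltaE X d N (Eseq X d N k) \<subseteq> {p. snd p \<in> dual_space d}"
  proof
    fix p assume "p \<in> DeltaE X d N (Eseq X d N k)"
    then obtain as xi xis where p: "p = (as, xi)" "\<forall>i\<le>N. xis i \<in> fibre (Eseq X d N k) (as i)"
      "xi = (\<lambda>\<alpha>. \<Sum>i\<le>N. xis i \<alpha>)"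
      unfolding DeltaE_def by blast
    have "\<forall>i\<le>N. xis i \<in> dual_space d" using p(2) Suc.IH by (auto simp: fibre_def)
    then show "p \<in> {p. snd p \<in> dual_space d}" using p by (auto simp: dual_space_def)
  qed
  have "closure (DeltaE X d N (Eseq X d N k)) \<subseteq> {p. snd p \<in> dual_space d}"
    by (rule closure_minimal[OF D closed_dual_pairs])
  then have "fibre (Eprime X d N (Eseq X d N k)) a \<subseteq> dual_space d"
    unfolding fibre_def Eprime_def by auto
  then show ?case using Suc.prems fspan_sub_dual by auto
qed

lemma similarity_comp:
  "similarity \<psi> a \<Longrightarrow> similarity \<phi> b \<Longrightarrow> similarity (\<psi> \<circ> \<phi>) (a * b)"
  unfolding similarity_def by auto

lemma similarity_id: "similarity id 1"
  unfolding similarity_def by auto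

lemma selfsim_iter:
  fixes X :: "(real^'n::finite) set"
  assumes ss: "self_similar X" and sX: "s \<in> X"
  shows "\<exists>R. 0 < R \<and> R < 1 \<and>
    (\<forall>k. \<exists>\<psi> \<rho>. similarity \<psi> \<rho> \<and> \<rho> \<le> R ^ k \<and> \<psi> ` X \<subseteq> X \<and> s \<in> \<psi> ` X)"
proof -
  obtain p :: nat and \<phi> :: "nat \<Rightarrow> real^'n \<Rightarrow> real^'n" where p: "p \<ge> 2"
    and sim: "\<forall>i<p. \<exists>r. r < 1 \<and> similarity (\<phi> i) r"
    and XU: "X = (\<Union>i<p. \<phi> i ` X)"
    using ss unfolding self_similar_def by blast
  obtain r where r: "\<And>i. i < p \<Longrightarrow> r i < 1 \<and> similarity (\<phi> i) (r i)"
    using sim by metis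
  define R where "R = Max (r ` {..<p})"
  have ne: "r ` {..<p} \<noteq> {}" using p by (auto simp: lessThan_empty_iff)
  have R1: "R < 1" unfolding R_def using r ne by (subst Max_less_iff) auto
  have rR: "i < p \<Longrightarrow> r i \<le> R" for i unfolding R_def by (rule Max_ge) auto
  have R0: "0 < R" using rR[of 0] r[of 0] p by (auto simp: similarity_def)
  have "\<exists>\<psi> \<rho>. similarity \<psi> \<rho> \<and> \<rho> \<le> R ^ k \<and> \<psi> ` X \<subseteq> X \<and> s \<in> \<psi> ` X" for k
  proof (induction k)
    case 0
    show ?case using similarity_id sX by (intro exI[of _ id] exI[of _ 1]) (auto simp: id_def)
  next
    case (Suc k)
    then obtain \<psi> \<rho> where h: "similarity \<psi> \<rho>" "\<rho> \<le> R ^ k" "\<psi> ` X \<subseteq> X" "s \<in> \<psi> ` X" by blast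
    then obtain x where x: "x \<in> X" "s = \<psi> x" by blast
    then obtain i where i: "i < p" "x \<in> \<phi> i ` X" using XU by blast
    have sim2: "similarity (\<psi> \<circ> \<phi> i) (\<rho> * r i)" using similarity_comp h(1) r[OF i(1)] by blast
    have "\<rho> * r i \<le> R ^ k * R"
    proof (rule mult_mono)
      show "0 \<le> R ^ k" using R0 by simp
      show "0 \<le> r i" using r[OF i(1)] by (simp add: similarity_def)
    qed (use h(2) rR[OF i(1)] in auto)
    moreover have "(\<psi> \<circ> \<phi> i) ` X \<subseteq> X"
    proof -
      have "\<phi> i ` X \<subseteq> X" using XU i(1) by blast
      then show ?thesis using h(3) by auto
    qed
    moreover have "s \<in> (\<psi> \<circ> \<phi> i) ` X" using x i by auto
    ultimately show ?case using sim2 by (intro exI[of _ "\<psi> \<circ> \<phi> i"] exI[of _ "\<rho> * r i"]) (simp add: mult.commute comp_def)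
  qed
  then show ?thesis using R0 R1 by blast
qed

lemma similarity_decomp:
  fixes \<psi> :: "real^'n::finite \<Rightarrow> real^'n"
  assumes "similarity \<psi> \<rho>"
  defines "Q \<equiv> (\<lambda>x. (1 / \<rho>) *\<^sub>R (\<psi> x - \<psi> 0))"
  shows "linear Q" "\<And>x. norm (Q x) = norm x" "\<And>x. \<psi> x = \<psi> 0 + \<rho> *\<^sub>R Q x" "\<rho> > 0"
proof -
  have r0: "\<rho> > 0" and d: "\<And>x y. dist (\<psi> x) (\<psi> y) = \<rho> * dist x y"
    using assms(1) unfolding similarity_def by auto
  have dq: "dist (Q x) (Q y) = dist x y" for x y
  proof -
    have "dist (Q x) (Q y) = norm ((1/\<rho>) *\<^sub>R (\<psi> x - \<psi> y))"
      unfolding Q_def dist_norm by (simp add: algebra_simps)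
    also have "\<dots> = (1/\<rho>) * dist (\<psi> x) (\<psi> y)" using r0 by (simp add: dist_norm)
    also have "\<dots> = dist x y" using r0 d by simp
    finally show ?thesis .
  qed
  show "linear Q" by (rule isometry_linear) (use dq in \<open>auto simp: Q_def\<close>)
  show "norm (Q x) = norm x" for x using dq[of x 0] by (simp add: Q_def dist_norm)
  show "\<psi> x = \<psi> 0 + \<rho> *\<^sub>R Q x" for x using r0 by (simp add: Q_def)
  show "\<rho> > 0" by fact
qed

lemma mv_tendsto:
  fixes Mk :: "nat \<Rightarrow> real^'n::finite^'m::finite" and vk :: "nat \<Rightarrow> real^'n"
  assumes "Mk \<longlonglongrightarrow> A" "vk \<longlonglongrightarrow> v"
  shows "(\<lambda>k. Mk k *v vk k) \<longlonglongrightarrow> A *v v"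
proof (rule vec_tendstoI)
  fix i
  have "(\<lambda>k. \<Sum>j\<in>UNIV. Mk k $ i $ j * vk k $ j) \<longlonglongrightarrow> (\<Sum>j\<in>UNIV. A $ i $ j * v $ j)"
    by (intro tendsto_sum tendsto_mult tendsto_vec_nth assms)
  then show "(\<lambda>k. (Mk k *v vk k) $ i) \<longlonglongrightarrow> (A *v v) $ i"
    by (simp add: matrix_vector_mult_def)
qed

lemma matrix_isometry_bound:
  fixes Q :: "real^'n::finite \<Rightarrow> real^'n"
  assumes "\<And>x. norm (Q x) = norm x"
  shows "norm (matrix Q) \<le> real CARD('n) * real CARD('n)"
proof -
  have c: "\<bar>matrix Q $ i $ j\<bar> \<le> 1" for i j
  proof -
    have "\<bar>matrix Q $ i $ j\<bar> = \<bar>Q (axis j 1) $ i\<bar>" by (simp add: matrix_def)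
    also have "\<dots> \<le> norm (Q (axis j 1))" by (rule component_le_norm_cart)
    also have "\<dots> = 1" using assms by simp
    finally show ?thesis .
  qed
  have r: "norm (matrix Q $ i) \<le> real CARD('n)" for i
  proof -
    have "norm (matrix Q $ i) \<le> (\<Sum>j\<in>UNIV. \<bar>matrix Q $ i $ j\<bar>)" by (rule norm_le_l1_cart)
    also have "\<dots> \<le> (\<Sum>j\<in>(UNIV::'n set). 1)" by (intro sum_mono c)
    finally show ?thesis by simp
  qed
  have "norm (matrix Q) \<le> (\<Sum>i\<in>UNIV. norm (matrix Q $ i))"
    unfolding norm_vec_def by (rule L2_set_le_sum) simp
  also have "\<dots> \<le> (\<Sum>i\<in>(UNIV::'n set). real CARD('n))" by (intro sum_mono r)
  finally show ?thesis by simp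
qed

lemma selfsim_limit:
  fixes X :: "(real^'n::finite) set"
  assumes ss: "self_similar X" and sX: "s \<in> X"
  shows "\<exists>(\<rho>::nat \<Rightarrow> real) (I::nat \<Rightarrow> real^'n \<Rightarrow> real^'n) (A::real^'n^'n) y0 Ainv.
    (\<forall>k. 0 < \<rho> k \<and> \<rho> k \<le> 1) \<and> \<rho> \<longlonglongrightarrow> 0 \<and>
    (\<forall>k. \<forall>x\<in>X. s + \<rho> k *\<^sub>R I k x \<in> X) \<and>
    (\<forall>k x x'. norm (I k x - I k x') = norm (x - x')) \<and>
    (\<forall>k. \<exists>b L. linear L \<and> (\<forall>x. I k x = b + L x)) \<and>
    (\<forall>x. (\<lambda>k. I k x) \<longlonglongrightarrow> A *v (x - y0)) \<and>
    linear Ainv \<and> (\<forall>z. A *v (Ainv z) = z) \<and> (\<forall>v. Ainv (A *v v) = v)"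
proof -
  from selfsim_iter[OF ss sX] obtain R where RR: "0 < R \<and> R < 1 \<and>
    (\<forall>k. \<exists>\<psi> \<rho>. similarity \<psi> \<rho> \<and> \<rho> \<le> R ^ k \<and> \<psi> ` X \<subseteq> X \<and> s \<in> \<psi> ` X)" ..
  have R0: "0 < R" and R1: "R < 1" using RR by auto
  have it': "\<forall>k. \<exists>\<psi>. \<exists>\<rho>. similarity \<psi> \<rho> \<and> \<rho> \<le> R ^ k \<and> \<psi> ` X \<subseteq> X \<and> s \<in> \<psi> ` X"
    using RR by (rule conjunct2[OF conjunct2])
  from choice[OF it'] obtain \<Psi> where
    "\<forall>k. \<exists>\<rho>. similarity (\<Psi> k) \<rho> \<and> \<rho> \<le> R ^ k \<and> \<Psi> k ` X \<subseteq> X \<and> s \<in> \<Psi> k ` X" ..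
  from choice[OF this] obtain \<rho> where h0:
    "\<forall>k. similarity (\<Psi> k) (\<rho> k) \<and> \<rho> k \<le> R ^ k \<and> \<Psi> k ` X \<subseteq> X \<and> s \<in> \<Psi> k ` X" ..
  note h = h0[rule_format]
  have "\<forall>k. \<exists>y. y \<in> X \<and> \<Psi> k y = s"
  proof
    fix k
    have "s \<in> \<Psi> k ` X" using h[of k] by (elim conjE)
    then show "\<exists>y. y \<in> X \<and> \<Psi> k y = s" by (elim imageE) auto
  qed
  from choice[OF this] obtain y where y0: "\<forall>k. y k \<in> X \<and> \<Psi> k (y k) = s" ..
  then have y: "\<And>k. y k \<in> X" "\<And>k. \<Psi> k (y k) = s" by auto
  define Q where "Q k = (\<lambda>x. (1 / \<rho> k) *\<^sub>R (\<Psi> k x - \<Psi> k 0))" for k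
  have Ql: "linear (Q k)" and Qn: "\<And>x. norm (Q k x) = norm x"
    and Qd: "\<And>x. \<Psi> k x = \<Psi> k 0 + \<rho> k *\<^sub>R Q k x" and rp: "\<rho> k > 0" for k
    using similarity_decomp[of "\<Psi> k" "\<rho> k"] h[of k] unfolding Q_def by auto
  define I where "I k x = Q k (x - y k)" for k x
  have rle: "\<rho> k \<le> 1" for k using h[of k] R0 R1 by (meson less_imp_le order_trans power_le_one)
  have rlim: "\<rho> \<longlonglongrightarrow> 0"
  proof (rule tendsto_sandwich[of "\<lambda>_. 0" _ _ "\<lambda>k. R ^ k"])
    show "\<forall>\<^sub>F n in sequentially. 0 \<le> \<rho> n" using rp by (simp add: less_imp_le)
    show "\<forall>\<^sub>F n in sequentially. \<rho> n \<le> R ^ n" using h by simp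
    show "(\<lambda>n. R ^ n) \<longlonglongrightarrow> 0" using R0 R1 by (intro LIMSEQ_realpow_zero) auto
  qed simp
  have inX: "\<forall>k. \<forall>x\<in>X. s + \<rho> k *\<^sub>R I k x \<in> X"
  proof (intro allI ballI)
    fix k x assume xX: "x \<in> X"
    have "s + \<rho> k *\<^sub>R I k x = \<Psi> k (y k) + \<rho> k *\<^sub>R (Q k x - Q k (y k))"
      unfolding I_def y(2) using linear_diff[OF Ql] by simp
    also have "\<dots> = \<Psi> k x" using Qd[of k x] Qd[of k "y k"] by (simp add: algebra_simps)
    finally show "s + \<rho> k *\<^sub>R I k x \<in> X" using h[of k] xX by auto
  qed
  have iso: "\<forall>k x x'. norm (I k x - I k x') = norm (x - x')"
  proof (intro allI)
    fix k x x'
    have "I k x - I k x' = Q k (x - x')"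
      unfolding I_def using linear_diff[OF Ql, of k "x - y k" "x' - y k"] by simp
    then show "norm (I k x - I k x') = norm (x - x')" by (simp add: Qn)
  qed
  have aff: "\<forall>k. \<exists>b L. linear L \<and> (\<forall>x. I k x = b + L x)"
  proof
    fix k
    show "\<exists>b L. linear L \<and> (\<forall>x. I k x = b + L x)"
      by (intro exI[of _ "- Q k (y k)"] exI[of _ "Q k"]) (simp add: I_def linear_diff[OF Ql] Ql)
  qed
  define f where "f k = (matrix (Q k), y k)" for k
  have bX: "bounded X" using ss unfolding self_similar_def by (auto intro: compact_imp_bounded)
  have mb: "norm (matrix (Q k)) \<le> real CARD('n) * real CARD('n)" for k
    by (rule matrix_isometry_bound) (rule Qn)
  have bM: "bounded (range (\<lambda>k. matrix (Q k)))"
    unfolding bounded_iff using mb by blast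
  have "bounded (range f)"
    by (rule bounded_subset[OF bounded_Times[OF bM bX]]) (auto simp: f_def y(1))
  then obtain l r where sm: "strict_mono r" and fl: "(f \<circ> r) \<longlonglongrightarrow> l"
    using bounded_imp_convergent_subsequence by blast
  define A where "A = fst l"
  define y0 where "y0 = snd l"
  have MA: "(\<lambda>k. matrix (Q (r k))) \<longlonglongrightarrow> A"
    using tendsto_fst[OF fl] unfolding A_def f_def o_def by simp
  have yy: "(\<lambda>k. y (r k)) \<longlonglongrightarrow> y0"
    using tendsto_snd[OF fl] unfolding y0_def f_def o_def by simp
  have Qm: "Q k x = matrix (Q k) *v x" for k x
    using matrix_vector_mul(2)[OF Ql[of k]] by metis
  have Ilim: "(\<lambda>k. I (r k) x) \<longlonglongrightarrow> A *v (x - y0)" for x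
  proof -
    have "(\<lambda>k. matrix (Q (r k)) *v (x - y (r k))) \<longlonglongrightarrow> A *v (x - y0)"
      by (intro mv_tendsto MA tendsto_diff tendsto_const yy)
    then show ?thesis unfolding I_def Qm[symmetric] .
  qed
  have An: "norm (A *v v) = norm v" for v
  proof -
    have "(\<lambda>k. norm (matrix (Q (r k)) *v v)) \<longlonglongrightarrow> norm (A *v v)"
      by (intro tendsto_norm mv_tendsto MA tendsto_const)
    moreover have "(\<lambda>k. norm (matrix (Q (r k)) *v v)) = (\<lambda>k. norm v)"
      using Qn by (simp add: Qm[symmetric])
    ultimately show ?thesis by (simp add: LIMSEQ_const_iff)
  qed
  have linA: "linear (\<lambda>v. A *v v)" by simp
  have injA: "inj (\<lambda>v. A *v v)"
  proof (rule injI)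
    fix u v assume "A *v u = A *v v"
    then have "A *v (u - v) = 0" by (simp add: matrix_vector_mult_diff_distrib)
    then show "u = v" using An[of "u - v"] by simp
  qed
  obtain Ainv where Ai: "linear Ainv" "(\<lambda>v. A *v v) \<circ> Ainv = id"
    using real_vector.linear_surjective_right_inverse[OF linA eucl.linear_inj_imp_surj[OF linA injA]] by blast
  have Ai2: "\<forall>z. A *v (Ainv z) = z" using Ai(2) by (metis comp_apply id_apply)
  have Ai3: "\<forall>v. Ainv (A *v v) = v"
  proof
    fix v
    have "A *v (Ainv (A *v v)) = A *v v" using Ai2 by simp
    then show "Ainv (A *v v) = v" using injA by (simp add: inj_eq)
  qed
  show ?thesis
    apply (rule exI[of _ "\<lambda>k. \<rho> (r k)"], rule exI[of _ "\<lambda>k. I (r k)"], rule exI[of _ A],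
        rule exI[of _ y0], rule exI[of _ Ainv])
    using rp rle LIMSEQ_subseq_LIMSEQ[OF rlim sm] inX iso aff Ilim Ai(1) Ai2 Ai3
    by (auto simp: o_def)
qed

lemma mono_tendsto:
  assumes "(f \<longlongrightarrow> v) F"
  shows "((\<lambda>k. mono (f k) \<gamma>) \<longlongrightarrow> mono v \<gamma>) F"
  unfolding mono_def by (intro tendsto_prod tendsto_power tendsto_vec_nth assms)

lemma limit_in_Eprime:
  fixes X :: "(real^'n::finite) set" and s :: "real^'n" and xs :: "nat \<Rightarrow> real^'n"
    and I :: "nat \<Rightarrow> real^'n \<Rightarrow> real^'n"
  assumes sX: "s \<in> X"
    and rho: "\<forall>k. 0 < \<rho> k \<and> \<rho> k \<le> 1" "\<rho> \<longlonglongrightarrow> 0"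
    and inX: "\<forall>k. \<forall>x\<in>X. s + \<rho> k *\<^sub>R I k x \<in> X"
    and iso: "\<forall>k x x'. norm (I k x - I k x') = norm (x - x')"
    and Ilim: "\<forall>x. (\<lambda>k. I k x) \<longlonglongrightarrow> J x"
    and xsX: "\<forall>i\<le>N. xs i \<in> X"
    and bound: "\<forall>i\<le>N. norm (xs i - xs 0) ^ d * \<bar>c i\<bar> \<le> 1"
    and md: "m \<le> d"
    and kill: "\<forall>k \<gamma>. mdeg \<gamma> < m \<longrightarrow> (\<Sum>i\<le>N. c i * mono (I k (xs i)) \<gamma>) = 0"
    and wdef: "\<forall>\<gamma>\<in>mindices d. w \<gamma> = (\<Sum>i\<le>N. c i * mono (J (xs i)) \<gamma>)"
    and wdeg: "\<forall>\<gamma>\<in>mindices d. mdeg \<gamma> \<noteq> m \<longrightarrow> w \<gamma> = 0"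
    and TQ: "\<forall>\<alpha>\<in>mindices d. \<forall>h. mono (s + h) \<alpha> = (\<Sum>\<gamma>\<in>mindices d. TQ \<alpha> \<gamma> * mono h \<gamma>)"
  shows "(s, (\<lambda>\<alpha>. if \<alpha> \<in> mindices d then (\<Sum>\<gamma>\<in>mindices d. TQ \<alpha> \<gamma> * w \<gamma>) else 0))
           \<in> Eprime X d N (Eseq X d N 0)"
proof -
  let ?M = "mindices d :: 'n mindex set"
  define a where "a k i = (if i \<le> N then s + \<rho> k *\<^sub>R I k (xs i) else 0)" for k i
  define xis where "xis k i = (\<lambda>\<alpha>. (c i / \<rho> k ^ m) * delta d (a k i) \<alpha>)" for k i
  define xk where "xk k = (\<lambda>\<alpha>. \<Sum>i\<le>N. xis k i \<alpha>)" for k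
  define xinf where "xinf = (\<lambda>\<alpha>. if \<alpha> \<in> ?M then (\<Sum>\<gamma>\<in>?M. TQ \<alpha> \<gamma> * w \<gamma>) else 0)"
  define a0 where "a0 = (\<lambda>i. if i \<le> N then s else (0::real^'n))"
  have rp: "0 < \<rho> k" "\<rho> k \<le> 1" for k using rho by auto
  have inD: "(a k, xk k) \<in> DeltaE X d N (Eseq X d N 0)" for k
    unfolding DeltaE_def
  proof (intro CollectI exI conjI allI impI ballI)
    show "(a k, xk k) = (a k, xk k)" by simp
    fix i assume iN: "i \<le> N"
    show aX: "a k i \<in> X" using inX xsX iN by (simp add: a_def)
    show "xis k i \<in> fibre (Eseq X d N 0) (a k i)"
    proof -
      have "(a k i, (\<lambda>\<alpha>. (c i / \<rho> k ^ m) * delta d (a k i) \<alpha>)) \<in> Eseq X d N 0"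
        using aX by (simp only: Eseq.simps) blast
      then show ?thesis by (simp only: fibre_def xis_def mem_Collect_eq)
    qed
    fix \<alpha> :: "'n mindex" assume aM: "\<alpha> \<in> ?M"
    show "norm (a k i - a k 0) ^ (d - mdeg \<alpha>) * \<bar>dapply d (xis k i) (shifted_mono (a k i) \<alpha>)\<bar> \<le> 1"
    proof (cases "\<alpha> = (\<lambda>_. 0)")
      case False
      then show ?thesis using dapply_delta_shifted[OF aM, of "c i / \<rho> k ^ m" "a k i"]
        by (simp add: xis_def)
    next
      case True
      have md0: "mdeg \<alpha> = 0" using True by (simp add: mdeg_def)
      have dap: "dapply d (xis k i) (shifted_mono (a k i) \<alpha>) = c i / \<rho> k ^ m"
        using dapply_delta_shifted[OF aM, of "c i / \<rho> k ^ m" "a k i"] True by (simp add: xis_def)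
      have na: "norm (a k i - a k 0) = \<rho> k * norm (xs i - xs 0)"
      proof -
        have "a k i - a k 0 = \<rho> k *\<^sub>R (I k (xs i) - I k (xs 0))"
          using iN by (simp add: a_def algebra_simps)
        then show ?thesis using iso rp(1)[of k] by simp
      qed
      have "norm (a k i - a k 0) ^ (d - mdeg \<alpha>) * \<bar>dapply d (xis k i) (shifted_mono (a k i) \<alpha>)\<bar>
          = (\<rho> k * norm (xs i - xs 0)) ^ d * (\<bar>c i\<bar> / \<rho> k ^ m)"
        using rp(1)[of k] by (simp add: na md0 dap abs_mult)
      also have "\<dots> = \<rho> k ^ (d - m) * (norm (xs i - xs 0) ^ d * \<bar>c i\<bar>)"
      proof -
        have "\<rho> k ^ d = \<rho> k ^ (d - m) * \<rho> k ^ m" using md by (simp add: power_add[symmetric])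
        then show ?thesis using rp(1)[of k] by (simp add: power_mult_distrib field_simps)
      qed
      also have "\<dots> \<le> 1 * 1"
        using bound iN rp[of k]
        by (intro mult_mono power_le_one) (auto intro: mult_nonneg_nonneg)
      finally show ?thesis by simp
    qed
  next
    fix i :: nat assume "N < i" then show "a k i = 0" by (simp add: a_def)
  next
    show "xk k = (\<lambda>\<alpha>. \<Sum>i\<le>N. xis k i \<alpha>)" by (simp add: xk_def)
  qed
  have alim: "a \<longlonglongrightarrow> a0"
  proof (rule tendsto_fun_coord)
    fix i
    show "(\<lambda>k. a k i) \<longlonglongrightarrow> a0 i"
    proof (cases "i \<le> N")
      case True
      have "(\<lambda>k. s + \<rho> k *\<^sub>R I k (xs i)) \<longlonglongrightarrow> s + 0 *\<^sub>R J (xs i)"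
        using rho(2) Ilim by (intro tendsto_intros) auto
      then show ?thesis using True by (simp add: a_def a0_def)
    next
      case False
      then show ?thesis by (simp add: a_def a0_def)
    qed
  qed
  define Lam where "Lam k \<gamma> = (\<Sum>i\<le>N. c i * mono (I k (xs i)) \<gamma>)" for k \<gamma>
  have Lamlim: "(\<lambda>k. Lam k \<gamma>) \<longlonglongrightarrow> w \<gamma>" if "\<gamma> \<in> ?M" for \<gamma>
  proof -
    have "(\<lambda>k. Lam k \<gamma>) \<longlonglongrightarrow> (\<Sum>i\<le>N. c i * mono (J (xs i)) \<gamma>)"
      unfolding Lam_def using Ilim by (intro tendsto_sum tendsto_mult tendsto_const mono_tendsto) auto
    then show ?thesis using wdef that by simp
  qed
  have xkform: "xk k \<alpha> = (\<Sum>\<gamma>\<in>?M. TQ \<alpha> \<gamma> * (if mdeg \<gamma> < m then 0 else \<rho> k ^ (mdeg \<gamma> - m) * Lam k \<gamma>))"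
    if aM: "\<alpha> \<in> ?M" for k \<alpha>
  proof -
    have "xk k \<alpha> = (\<Sum>i\<le>N. (c i / \<rho> k ^ m) * mono (s + \<rho> k *\<^sub>R I k (xs i)) \<alpha>)"
      unfolding xk_def xis_def using aM by (intro sum.cong) (auto simp: delta_def a_def)
    also have "\<dots> = (\<Sum>i\<le>N. (c i / \<rho> k ^ m) * (\<Sum>\<gamma>\<in>?M. TQ \<alpha> \<gamma> * (\<rho> k ^ mdeg \<gamma> * mono (I k (xs i)) \<gamma>)))"
      using TQ aM by (simp add: mono_scale)
    also have "\<dots> = (\<Sum>\<gamma>\<in>?M. TQ \<alpha> \<gamma> * ((\<rho> k ^ mdeg \<gamma> / \<rho> k ^ m) * Lam k \<gamma>))"
      unfolding Lam_def sum_distrib_left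
      by (subst sum.swap) (intro sum.cong refl, simp add: field_simps)
    also have "\<dots> = (\<Sum>\<gamma>\<in>?M. TQ \<alpha> \<gamma> * (if mdeg \<gamma> < m then 0 else \<rho> k ^ (mdeg \<gamma> - m) * Lam k \<gamma>))"
    proof (intro sum.cong refl)
      fix \<gamma> :: "'n mindex" assume "\<gamma> \<in> ?M"
      show "TQ \<alpha> \<gamma> * ((\<rho> k ^ mdeg \<gamma> / \<rho> k ^ m) * Lam k \<gamma>) = TQ \<alpha> \<gamma> * (if mdeg \<gamma> < m then 0 else \<rho> k ^ (mdeg \<gamma> - m) * Lam k \<gamma>)"
      proof (cases "mdeg \<gamma> < m")
        case True
        then show ?thesis using kill by (simp add: Lam_def)
      next
        case False
        then have "\<rho> k ^ mdeg \<gamma> = \<rho> k ^ (mdeg \<gamma> - m) * \<rho> k ^ m" by (simp add: power_add[symmetric])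
        then show ?thesis using False rp(1)[of k] by simp
      qed
    qed
    finally show ?thesis .
  qed
  have xlim: "xk \<longlonglongrightarrow> xinf"
  proof (rule tendsto_fun_coord)
    fix \<alpha>
    show "(\<lambda>k. xk k \<alpha>) \<longlonglongrightarrow> xinf \<alpha>"
    proof (cases "\<alpha> \<in> ?M")
      case False
      then have "xk k \<alpha> = 0" for k by (simp add: xk_def xis_def delta_def)
      then show ?thesis using False by (simp add: xinf_def)
    next
      case True
      have "(\<lambda>k. \<Sum>\<gamma>\<in>?M. TQ \<alpha> \<gamma> * (if mdeg \<gamma> < m then 0 else \<rho> k ^ (mdeg \<gamma> - m) * Lam k \<gamma>))
          \<longlonglongrightarrow> (\<Sum>\<gamma>\<in>?M. TQ \<alpha> \<gamma> * (if mdeg \<gamma> < m then 0 else 0 ^ (mdeg \<gamma> - m) * w \<gamma>))"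
      proof (intro tendsto_sum tendsto_mult tendsto_const)
        fix \<gamma> :: "'n mindex" assume gM: "\<gamma> \<in> ?M"
        show "(\<lambda>k. if mdeg \<gamma> < m then 0 else \<rho> k ^ (mdeg \<gamma> - m) * Lam k \<gamma>)
            \<longlonglongrightarrow> (if mdeg \<gamma> < m then 0 else 0 ^ (mdeg \<gamma> - m) * w \<gamma>)"
        proof (cases "mdeg \<gamma> < m")
          case False
          then show ?thesis using Lamlim[OF gM] rho(2) by (simp add: tendsto_mult tendsto_power)
        qed simp
      qed
      moreover have "(\<Sum>\<gamma>\<in>?M. TQ \<alpha> \<gamma> * (if mdeg \<gamma> < m then 0 else 0 ^ (mdeg \<gamma> - m) * w \<gamma>)) = xinf \<alpha>"
        unfolding xinf_def using True
      proof (simp, intro sum.cong refl)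
        fix \<gamma> :: "'n mindex" assume gM: "\<gamma> \<in> ?M"
        show "TQ \<alpha> \<gamma> * (if mdeg \<gamma> < m then 0 else 0 ^ (mdeg \<gamma> - m) * w \<gamma>) = TQ \<alpha> \<gamma> * w \<gamma>"
          using wdeg gM by (cases "mdeg \<gamma> = m") auto
      qed
      ultimately show ?thesis using xkform[OF True] by simp
    qed
  qed
  have lim: "(\<lambda>k. (a k, xk k)) \<longlonglongrightarrow> (a0, xinf)" by (rule tendsto_Pair[OF alim xlim])
  have "(a0, xinf) \<in> closure (DeltaE X d N (Eseq X d N 0))"
    unfolding closure_sequential
    by (rule exI[of _ "\<lambda>k. (a k, xk k)"]) (use inD lim in blast)
  then show ?thesis unfolding Eprime_def a0_def xinf_def using sX by simp
qed

lemma hdeg_nondeg: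
  fixes X :: "(real^'n::finite) set"
  assumes H: "Hdeg X \<ge> enat (d + 1)"
    and z: "\<forall>x\<in>X. (\<Sum>\<alpha>\<in>mindices d. c \<alpha> * mono x \<alpha>) = 0"
  shows "\<forall>\<alpha>\<in>mindices d. c \<alpha> = 0"
proof (rule ccontr)
  assume "\<not> (\<forall>\<alpha>\<in>mindices d. c \<alpha> = 0)"
  then obtain \<alpha>0 where a0: "\<alpha>0 \<in> mindices d" "c \<alpha>0 \<noteq> 0" by blast
  define c' where "c' \<alpha> = (if \<alpha> \<in> mindices d then c \<alpha> else 0)" for \<alpha> :: "'n mindex"
  have supp: "{\<alpha>. c' \<alpha> \<noteq> 0} \<subseteq> mindices d" by (auto simp: c'_def)
  have ip: "is_poly c'" unfolding is_poly_def using finite_subset[OF supp finite_mindices] .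
  have nz: "c' \<noteq> (\<lambda>_. 0)" using a0 by (auto simp: c'_def fun_eq_iff)
  have pe: "peval c' x = (\<Sum>\<alpha>\<in>mindices d. c \<alpha> * mono x \<alpha>)" for x
  proof -
    have "peval c' x = (\<Sum>\<alpha>\<in>mindices d. c' \<alpha> * mono x \<alpha>)"
      unfolding peval_def using supp finite_mindices by (intro sum.mono_neutral_left) auto
    also have "\<dots> = (\<Sum>\<alpha>\<in>mindices d. c \<alpha> * mono x \<alpha>)" by (intro sum.cong) (auto simp: c'_def)
    finally show ?thesis .
  qed
  have pd: "pdeg c' \<le> d"
  proof -
    have fin: "finite (insert 0 (mdeg ` {\<alpha>. c' \<alpha> \<noteq> 0}))"
      using finite_subset[OF supp finite_mindices] by simp
    have "\<forall>x\<in>insert 0 (mdeg ` {\<alpha>. c' \<alpha> \<noteq> 0}). x \<le> d" using supp by (auto simp: mindices_def)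
    then show ?thesis unfolding pdeg_def using fin by (subst Max_le_iff) auto
  qed
  have "c' \<in> {c. is_poly c \<and> c \<noteq> (\<lambda>_. 0) \<and> (\<forall>x\<in>X. peval c x = 0)}"
    using ip nz z pe by auto
  then have "Hdeg X \<le> enat (pdeg c')" unfolding Hdeg_def by (rule INF_lower)
  also have "\<dots> \<le> enat d" using pd by simp
  finally have "Hdeg X \<le> enat d" .
  with H have "enat (d + 1) \<le> enat d" by (rule order_trans)
  then show False by simp
qed

lemma transfer_nondeg:
  fixes X :: "(real^'n::finite) set" and A :: "real^'n^'n"
  assumes H: "Hdeg X \<ge> enat (d + 1)"
    and Ai: "\<forall>z. A *v (Ainv z) = z"
    and z: "\<forall>x\<in>X. (\<Sum>\<alpha>\<in>mindices d. c \<alpha> * mono (A *v (x - y0)) \<alpha>) = 0"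
  shows "\<forall>\<alpha>\<in>mindices d. c \<alpha> = 0"
proof -
  have pf: "polyfun d (\<lambda>z::real^'n. \<Sum>\<alpha>\<in>mindices d. c \<alpha> * mono z \<alpha>)"
    unfolding polyfun_def by blast
  have "polyfun d (\<lambda>x. (\<lambda>z::real^'n. \<Sum>\<alpha>\<in>mindices d. c \<alpha> * mono z \<alpha>) (- (A *v y0) + (\<lambda>x. A *v x) x))"
    by (rule polyfun_affine[OF _ pf]) simp
  then obtain e where e: "\<And>x. (\<Sum>\<alpha>\<in>mindices d. c \<alpha> * mono (- (A *v y0) + A *v x) \<alpha>) = (\<Sum>\<alpha>\<in>mindices d. e \<alpha> * mono x \<alpha>)"
    unfolding polyfun_def by blast
  have Aeq: "- (A *v y0) + A *v x = A *v (x - y0)" for x by (simp add: matrix_vector_mult_diff_distrib)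
  have "\<forall>x\<in>X. (\<Sum>\<alpha>\<in>mindices d. e \<alpha> * mono x \<alpha>) = 0" using z e Aeq by metis
  then have e0: "\<forall>\<alpha>\<in>mindices d. e \<alpha> = 0" by (rule hdeg_nondeg[OF H])
  have "\<forall>z. (\<Sum>\<alpha>\<in>mindices d. c \<alpha> * mono z \<alpha>) = 0"
  proof
    fix z :: "real^'n"
    have "A *v ((Ainv z + y0) - y0) = z" using Ai by simp
    then have "(\<Sum>\<alpha>\<in>mindices d. c \<alpha> * mono z \<alpha>) = (\<Sum>\<alpha>\<in>mindices d. e \<alpha> * mono (Ainv z + y0) \<alpha>)"
      using e[of "Ainv z + y0"] Aeq[of "Ainv z + y0"] by simp
    also have "\<dots> = 0" using e0 by simp
    finally show "(\<Sum>\<alpha>\<in>mindices d. c \<alpha> * mono z \<alpha>) = 0" .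
  qed
  then show ?thesis by (rule poly_ident)
qed

lemma taylor_exists:
  fixes s :: "real^'n::finite"
  assumes "\<alpha> \<in> mindices d"
  shows "\<exists>q. \<forall>h. mono (s + h) \<alpha> = (\<Sum>\<gamma>\<in>mindices d. q \<gamma> * mono h \<gamma>)"
proof -
  have "polyfun d (\<lambda>h::real^'n. mono h \<alpha>)"
    using assms by (intro polyfun_monomial) (simp add: mindices_def)
  then have "polyfun d (\<lambda>h. (\<lambda>h::real^'n. mono h \<alpha>) (s + id h))"
    by (rule polyfun_affine[OF linear_id])
  then show ?thesis unfolding polyfun_def by simp
qed

lemma kill_lemma:
  fixes I :: "real^'n::finite \<Rightarrow> real^'n" and A :: "real^'n^'n"
  assumes aff: "\<exists>b L. linear L \<and> (\<forall>x. I x = b + L x)"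
    and lAi: "linear Ainv" and Ai: "\<forall>v. Ainv (A *v v) = v"
    and wdef: "\<forall>\<beta>\<in>mindices d. w \<beta> = (\<Sum>i\<le>N. c i * mono (A *v (xs i - y0)) \<beta>)"
    and wlow: "\<forall>\<beta>\<in>mindices d. mdeg \<beta> < m \<longrightarrow> w \<beta> = 0"
    and md: "m \<le> d" and g: "mdeg \<gamma> < m"
  shows "(\<Sum>i\<le>N. c i * mono (I (xs i)) \<gamma>) = 0"
proof -
  obtain b L where L: "linear L" "\<And>x. I x = b + L x" using aff by blast
  have "polyfun (mdeg \<gamma>) (\<lambda>z::real^'n. mono z \<gamma>)" by (rule polyfun_monomial) simp
  then have "polyfun (mdeg \<gamma>) (\<lambda>z. (\<lambda>z::real^'n. mono z \<gamma>) ((b + L y0) + (L \<circ> Ainv) z))"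
    by (rule polyfun_affine[OF linear_compose[OF lAi L(1)]])
  then obtain e where e: "\<And>z. mono ((b + L y0) + (L \<circ> Ainv) z) \<gamma> = (\<Sum>\<beta>\<in>mindices (mdeg \<gamma>). e \<beta> * mono z \<beta>)"
    unfolding polyfun_def by blast
  have Ix: "I (xs i) = (b + L y0) + (L \<circ> Ainv) (A *v (xs i - y0))" for i
  proof -
    have "(L \<circ> Ainv) (A *v (xs i - y0)) = L (xs i - y0)" using Ai by simp
    then show ?thesis using L by (simp add: linear_diff)
  qed
  have sub: "mindices (mdeg \<gamma>) \<subseteq> mindices d" using g md by (intro mindices_mono) simp
  have "(\<Sum>i\<le>N. c i * mono (I (xs i)) \<gamma>)
      = (\<Sum>i\<le>N. c i * (\<Sum>\<beta>\<in>mindices (mdeg \<gamma>). e \<beta> * mono (A *v (xs i - y0)) \<beta>))"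
    by (simp only: Ix e)
  also have "\<dots> = (\<Sum>\<beta>\<in>mindices (mdeg \<gamma>). e \<beta> * (\<Sum>i\<le>N. c i * mono (A *v (xs i - y0)) \<beta>))"
    unfolding sum_distrib_left by (subst sum.swap) (intro sum.cong refl, simp add: algebra_simps)
  also have "\<dots> = (\<Sum>\<beta>\<in>mindices (mdeg \<gamma>). e \<beta> * w \<beta>)"
    using wdef sub by (intro sum.cong refl) auto
  also have "\<dots> = 0"
  proof (intro sum.neutral ballI)
    fix \<beta> :: "'n mindex" assume "\<beta> \<in> mindices (mdeg \<gamma>)"
    then have "\<beta> \<in> mindices d" "mdeg \<beta> < m" using sub g by (auto simp: mindices_def)
    then show "e \<beta> * w \<beta> = 0" using wlow by simp
  qed
  finally show ?thesis .
qed

lemma key: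
  fixes X :: "(real^'n::finite) set" and s :: "real^'n"
  assumes NN: "Ndim CARD('n) d = N + 1" and ss: "self_similar X"
    and H: "Hdeg X \<ge> enat (d + 1)" and sX: "s \<in> X"
  shows "dual_space d \<subseteq> fspan (fibre (Eprime X d N (Eseq X d N 0)) s)"
proof -
  let ?M = "mindices d :: 'n mindex set"
  define W where "W = fibre (Eprime X d N (Eseq X d N 0)) s"
  from selfsim_limit[OF ss sX] obtain \<rho> I A y0 Ainv where SL:
    "(\<forall>k. 0 < \<rho> k \<and> \<rho> k \<le> 1) \<and> \<rho> \<longlonglongrightarrow> 0 \<and>
    (\<forall>k. \<forall>x\<in>X. s + \<rho> k *\<^sub>R I k x \<in> X) \<and>
    (\<forall>k x x'. norm (I k x - I k x') = norm (x - x')) \<and>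
    (\<forall>k. \<exists>b L. linear L \<and> (\<forall>x. I k x = b + L x)) \<and>
    (\<forall>x. (\<lambda>k. I k x) \<longlonglongrightarrow> A *v (x - y0)) \<and>
    linear Ainv \<and> (\<forall>z. A *v (Ainv z) = z) \<and> (\<forall>v. Ainv (A *v v) = v)"
    by (elim exE)
  have SL1: "\<forall>k. 0 < \<rho> k \<and> \<rho> k \<le> 1" and SL2: "\<rho> \<longlonglongrightarrow> 0"
    and SL3: "\<forall>k. \<forall>x\<in>X. s + \<rho> k *\<^sub>R I k x \<in> X"
    and SL4: "\<forall>k x x'. norm (I k x - I k x') = norm (x - x')"
    and SL5: "\<forall>k. \<exists>b L. linear L \<and> (\<forall>x. I k x = b + L x)"
    and SL6: "\<forall>x. (\<lambda>k. I k x) \<longlonglongrightarrow> A *v (x - y0)"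
    and SL7: "linear Ainv" and SL8: "\<forall>z. A *v (Ainv z) = z" and SL9: "\<forall>v. Ainv (A *v v) = v"
    using SL by auto
  have WD: "W \<subseteq> dual_space d"
  proof
    fix \<xi> assume xW: "\<xi> \<in> W"
    have "\<xi> \<in> fspan W" unfolding fspan_def
      by (intro CollectI exI[of _ "{\<xi>}"] exI[of _ "\<lambda>_. 1"]) (use xW in auto)
    then have "(s, \<xi>) \<in> Eseq X d N (Suc 0)" using sX by (simp add: W_def)
    then show "\<xi> \<in> dual_space d" by (rule Eseq_dual)
  qed
  have WM: "\<forall>\<zeta>\<in>W. \<forall>\<alpha>. \<alpha> \<notin> ?M \<longrightarrow> \<zeta> \<alpha> = 0" using WD by (auto simp: dual_space_def)
  have nondegW: "\<forall>p. (\<forall>\<zeta>\<in>W. (\<Sum>\<alpha>\<in>?M. p \<alpha> * \<zeta> \<alpha>) = 0) \<longrightarrow> (\<forall>\<alpha>\<in>?M. p \<alpha> = 0)"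
  proof (intro allI impI)
    fix p assume orth: "\<forall>\<zeta>\<in>W. (\<Sum>\<alpha>\<in>?M. p \<alpha> * \<zeta> \<alpha>) = 0"
    show "\<forall>\<alpha>\<in>?M. p \<alpha> = 0"
    proof (rule ccontr)
      assume np: "\<not> (\<forall>\<alpha>\<in>?M. p \<alpha> = 0)"
      have "\<forall>\<alpha>. \<exists>q. \<alpha> \<in> ?M \<longrightarrow> (\<forall>h. mono (s + h) \<alpha> = (\<Sum>\<gamma>\<in>?M. q \<gamma> * mono h \<gamma>))"
        using taylor_exists by blast
      from choice[OF this] obtain TQ where
        TQ0: "\<forall>\<alpha>. \<alpha> \<in> ?M \<longrightarrow> (\<forall>h. mono (s + h) \<alpha> = (\<Sum>\<gamma>\<in>?M. TQ \<alpha> \<gamma> * mono h \<gamma>))" ..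
      have TQ: "\<forall>\<alpha>\<in>?M. \<forall>h. mono (s + h) \<alpha> = (\<Sum>\<gamma>\<in>?M. TQ \<alpha> \<gamma> * mono h \<gamma>)" using TQ0 by blast
      define q where "q \<gamma> = (\<Sum>\<alpha>\<in>?M. p \<alpha> * TQ \<alpha> \<gamma>)" for \<gamma>
      have swap: "(\<Sum>\<alpha>\<in>?M. p \<alpha> * (\<Sum>\<gamma>\<in>?M. TQ \<alpha> \<gamma> * f \<gamma>)) = (\<Sum>\<gamma>\<in>?M. q \<gamma> * f \<gamma>)" for f
        unfolding q_def sum_distrib_left sum_distrib_right
        by (subst sum.swap) (intro sum.cong refl, simp add: algebra_simps)
      have qnz: "\<exists>\<gamma>\<in>?M. q \<gamma> \<noteq> 0"
      proof (rule ccontr)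
        assume "\<not> (\<exists>\<gamma>\<in>?M. q \<gamma> \<noteq> 0)"
        then have q0: "\<forall>\<gamma>\<in>?M. q \<gamma> = 0" by blast
        have "\<forall>x::real^'n. (\<Sum>\<alpha>\<in>?M. p \<alpha> * mono x \<alpha>) = 0"
        proof
          fix x :: "real^'n"
          have "(\<Sum>\<alpha>\<in>?M. p \<alpha> * mono x \<alpha>) = (\<Sum>\<alpha>\<in>?M. p \<alpha> * (\<Sum>\<gamma>\<in>?M. TQ \<alpha> \<gamma> * mono (x - s) \<gamma>))"
          proof (intro sum.cong refl)
            fix \<alpha> assume "\<alpha> \<in> ?M"
            then show "p \<alpha> * mono x \<alpha> = p \<alpha> * (\<Sum>\<gamma>\<in>?M. TQ \<alpha> \<gamma> * mono (x - s) \<gamma>)"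
              using TQ[rule_format, of \<alpha> "x - s"] by simp
          qed
          also have "\<dots> = (\<Sum>\<gamma>\<in>?M. q \<gamma> * mono (x - s) \<gamma>)" by (rule swap)
          also have "\<dots> = 0" using q0 by simp
          finally show "(\<Sum>\<alpha>\<in>?M. p \<alpha> * mono x \<alpha>) = 0" .
        qed
        then have "\<forall>\<alpha>\<in>?M. p \<alpha> = 0" by (rule poly_ident)
        then show False using np by blast
      qed
      define G where "G = {\<gamma>\<in>?M. q \<gamma> \<noteq> 0}"
      have fG: "finite G" unfolding G_def by (rule finite_subset[of _ ?M]) (auto simp: finite_mindices)
      have neG: "G \<noteq> {}" using qnz unfolding G_def by blast
      define m where "m = Max (mdeg ` G)"
      have "m \<in> mdeg ` G" unfolding m_def using fG neG by (intro Max_in) auto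
      then obtain \<gamma>m where gm: "\<gamma>m \<in> ?M" "q \<gamma>m \<noteq> 0" "mdeg \<gamma>m = m" unfolding G_def by auto
      have md: "m \<le> d" using gm by (auto simp: mindices_def)
      define w0 where "w0 \<gamma> = (if \<gamma> \<in> ?M \<and> mdeg \<gamma> = m then q \<gamma> else 0)" for \<gamma>
      define Z where "Z = delta d ` ((\<lambda>x. A *v (x - y0)) ` X)"
      have ZM: "\<forall>\<zeta>\<in>Z. \<forall>\<alpha>. \<alpha> \<notin> ?M \<longrightarrow> \<zeta> \<alpha> = 0" by (auto simp: Z_def delta_def)
      have Znd: "\<forall>c. (\<forall>\<zeta>\<in>Z. (\<Sum>\<alpha>\<in>?M. c \<alpha> * \<zeta> \<alpha>) = 0) \<longrightarrow> (\<forall>\<alpha>\<in>?M. c \<alpha> = 0)"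
      proof (intro allI impI)
        fix c assume h: "\<forall>\<zeta>\<in>Z. (\<Sum>\<alpha>\<in>?M. c \<alpha> * \<zeta> \<alpha>) = 0"
        have "\<forall>x\<in>X. (\<Sum>\<alpha>\<in>?M. c \<alpha> * mono (A *v (x - y0)) \<alpha>) = 0"
        proof
          fix x assume "x \<in> X"
          then have "delta d (A *v (x - y0)) \<in> Z" by (simp add: Z_def)
          then have "(\<Sum>\<alpha>\<in>?M. c \<alpha> * delta d (A *v (x - y0)) \<alpha>) = 0" using h by blast
          moreover have "(\<Sum>\<alpha>\<in>?M. c \<alpha> * delta d (A *v (x - y0)) \<alpha>) = (\<Sum>\<alpha>\<in>?M. c \<alpha> * mono (A *v (x - y0)) \<alpha>)"
            by (intro sum.cong) (auto simp: delta_def)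
          ultimately show "(\<Sum>\<alpha>\<in>?M. c \<alpha> * mono (A *v (x - y0)) \<alpha>) = 0" by simp
        qed
        then show "\<forall>\<alpha>\<in>?M. c \<alpha> = 0" by (rule transfer_nondeg[OF H SL8])
      qed
      have w0M: "\<forall>\<alpha>. \<alpha> \<notin> ?M \<longrightarrow> w0 \<alpha> = 0" by (simp add: w0_def)
      obtain F u where F: "finite F" "F \<subseteq> Z" "card F \<le> card ?M" "w0 = (\<lambda>\<alpha>. \<Sum>v\<in>F. u v * v \<alpha>)"
        using span_full[OF finite_mindices ZM Znd w0M] by blast
      have cF: "card F \<le> N + 1" using F(3) card_mindices_le[where 'n='n and d=d] NN by simp
      obtain en where en: "bij_betw en {0..<card F} F" using ex_bij_betw_nat_finite[OF F(1)] by blast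
      have "\<forall>v\<in>F. \<exists>x. x \<in> X \<and> v = delta d (A *v (x - y0))" using F(2) by (auto simp: Z_def)
      from bchoice[OF this] obtain xp where xp: "\<forall>v\<in>F. xp v \<in> X \<and> v = delta d (A *v (xp v - y0))" by blast
      define xs where "xs i = (if i < card F then xp (en i) else s)" for i
      define c0 where "c0 i = (if i < card F then u (en i) else 0)" for i
      have enF: "i < card F \<Longrightarrow> en i \<in> F" for i using en by (auto simp: bij_betw_def)
      have xsX: "\<forall>i\<le>N. xs i \<in> X" using xp enF sX by (auto simp: xs_def)
      have w0rep: "\<forall>\<gamma>\<in>?M. w0 \<gamma> = (\<Sum>i\<le>N. c0 i * mono (A *v (xs i - y0)) \<gamma>)"
      proof
        fix \<gamma> assume gM: "\<gamma> \<in> ?M"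
        have "w0 \<gamma> = (\<Sum>v\<in>F. u v * v \<gamma>)" using F(4) by simp
        also have "\<dots> = (\<Sum>i\<in>{0..<card F}. u (en i) * en i \<gamma>)"
          using sum.reindex_bij_betw[OF en, of "\<lambda>v. u v * v \<gamma>"] by simp
        also have "\<dots> = (\<Sum>i\<in>{0..<card F}. c0 i * mono (A *v (xs i - y0)) \<gamma>)"
        proof (intro sum.cong refl)
          fix i assume "i \<in> {0..<card F}"
          then have i: "i < card F" by simp
          then have "en i = delta d (A *v (xs i - y0))" using xp enF[OF i] by (simp add: xs_def)
          then show "u (en i) * en i \<gamma> = c0 i * mono (A *v (xs i - y0)) \<gamma>"
            using i gM by (simp add: c0_def delta_def)
        qed
        also have "\<dots> = (\<Sum>i\<le>N. c0 i * mono (A *v (xs i - y0)) \<gamma>)"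
          using cF by (intro sum.mono_neutral_left) (auto simp: c0_def)
        finally show "w0 \<gamma> = (\<Sum>i\<le>N. c0 i * mono (A *v (xs i - y0)) \<gamma>)" .
      qed
      define S where "S = (\<Sum>i\<le>N. norm (xs i - xs 0) ^ d * \<bar>c0 i\<bar>)"
      have S0: "S \<ge> 0" unfolding S_def by (intro sum_nonneg) auto
      define lam where "lam = 1 / (1 + S)"
      have lam0: "lam > 0" using S0 by (simp add: lam_def)
      define c where "c i = lam * c0 i" for i
      define w where "w \<gamma> = lam * w0 \<gamma>" for \<gamma>
      have bound: "\<forall>i\<le>N. norm (xs i - xs 0) ^ d * \<bar>c i\<bar> \<le> 1"
      proof (intro allI impI)
        fix i assume iN: "i \<le> N"
        have "norm (xs i - xs 0) ^ d * \<bar>c0 i\<bar> \<le> S"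
          unfolding S_def using iN by (intro member_le_sum) auto
        then have "lam * (norm (xs i - xs 0) ^ d * \<bar>c0 i\<bar>) \<le> lam * (1 + S)"
          using lam0 by (intro mult_left_mono) auto
        also have "\<dots> = 1" using S0 by (simp add: lam_def)
        finally show "norm (xs i - xs 0) ^ d * \<bar>c i\<bar> \<le> 1"
          using lam0 by (simp add: c_def abs_mult algebra_simps)
      qed
      have wdef: "\<forall>\<gamma>\<in>?M. w \<gamma> = (\<Sum>i\<le>N. c i * mono (A *v (xs i - y0)) \<gamma>)"
        using w0rep by (simp add: w_def c_def sum_distrib_left mult.assoc)
      have wlow: "\<forall>\<beta>\<in>?M. mdeg \<beta> < m \<longrightarrow> w \<beta> = 0" by (simp add: w_def w0_def)
      have wdeg: "\<forall>\<gamma>\<in>?M. mdeg \<gamma> \<noteq> m \<longrightarrow> w \<gamma> = 0" by (simp add: w_def w0_def)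
      have kill: "\<forall>k \<gamma>. mdeg \<gamma> < m \<longrightarrow> (\<Sum>i\<le>N. c i * mono (I k (xs i)) \<gamma>) = 0"
      proof (intro allI impI)
        fix k and \<gamma> :: "'n mindex" assume g: "mdeg \<gamma> < m"
        show "(\<Sum>i\<le>N. c i * mono (I k (xs i)) \<gamma>) = 0"
          by (rule kill_lemma[OF SL5[rule_format, of k] SL7 SL9 wdef wlow md g])
      qed
      have inE: "(s, (\<lambda>\<alpha>. if \<alpha> \<in> ?M then (\<Sum>\<gamma>\<in>?M. TQ \<alpha> \<gamma> * w \<gamma>) else 0)) \<in> Eprime X d N (Eseq X d N 0)"
        by (rule limit_in_Eprime[OF sX SL1 SL2 SL3 SL4 SL6 xsX bound md kill wdef wdeg TQ])
      then have inW: "(\<lambda>\<alpha>. if \<alpha> \<in> ?M then (\<Sum>\<gamma>\<in>?M. TQ \<alpha> \<gamma> * w \<gamma>) else 0) \<in> W"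
        by (simp add: W_def fibre_def)
      have o0: "(\<Sum>\<alpha>\<in>?M. p \<alpha> * (if \<alpha> \<in> ?M then (\<Sum>\<gamma>\<in>?M. TQ \<alpha> \<gamma> * w \<gamma>) else 0)) = 0"
        using bspec[OF orth inW] by simp
      have "(\<Sum>\<alpha>\<in>?M. p \<alpha> * (if \<alpha> \<in> ?M then (\<Sum>\<gamma>\<in>?M. TQ \<alpha> \<gamma> * w \<gamma>) else 0))
          = (\<Sum>\<alpha>\<in>?M. p \<alpha> * (\<Sum>\<gamma>\<in>?M. TQ \<alpha> \<gamma> * w \<gamma>))" by (intro sum.cong) auto
      also have "\<dots> = (\<Sum>\<gamma>\<in>?M. q \<gamma> * w \<gamma>)" by (rule swap)
      also have "\<dots> = lam * (\<Sum>\<gamma>\<in>?M. if mdeg \<gamma> = m then (q \<gamma>)\<^sup>2 else 0)"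
        unfolding sum_distrib_left by (intro sum.cong refl) (auto simp: w_def w0_def power2_eq_square)
      also have "\<dots> > 0"
      proof (intro mult_pos_pos lam0 sum_pos2[OF finite_mindices gm(1)])
        show "0 < (if mdeg \<gamma>m = m then (q \<gamma>m)\<^sup>2 else 0)" using gm by simp
      qed auto
      finally show False using o0 by simp
    qed
  qed
  show ?thesis
  proof
    fix \<xi> :: "'n mindex \<Rightarrow> real" assume "\<xi> \<in> dual_space d"
    then have xiM: "\<forall>\<alpha>. \<alpha> \<notin> ?M \<longrightarrow> \<xi> \<alpha> = 0" by (simp add: dual_space_def)
    obtain F u where "finite F" "F \<subseteq> W" "\<xi> = (\<lambda>\<alpha>. \<Sum>v\<in>F. u v * v \<alpha>)"
      using span_full[OF finite_mindices WM nondegW xiM] by blast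
    then show "\<xi> \<in> fspan (fibre (Eprime X d N (Eseq X d N 0)) s)"
      unfolding fspan_def W_def by blast
  qed
qed

lemma fspan_mono: "S \<subseteq> T \<Longrightarrow> fspan S \<subseteq> fspan T"
  unfolding fspan_def by blast

theorem theorem5p2:
  fixes X :: "(real^'n::finite) set" and d N :: nat
  assumes "Ndim CARD('n) d = N + 1"
    and "self_similar X"
    and "Hdeg X \<ge> enat (d + 1)"
  shows "\<forall>s\<in>X. fibre (paratangent X d N) s = dual_space d"
proof
  fix s assume sX: "s \<in> X"
  define k where "k = 2 * Ndim CARD('n) d - 1"
  have K: "2 * Ndim CARD('n) d = Suc k" using assms(1) by (simp add: k_def)
  have P: "paratangent X d N = Eseq X d N (Suc k)" unfolding paratangent_def K ..
  show "fibre (paratangent X d N) s = dual_space d"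
  proof
    show "fibre (paratangent X d N) s \<subseteq> dual_space d"
      unfolding fibre_def P using Eseq_dual by blast
  next
    show "dual_space d \<subseteq> fibre (paratangent X d N) s"
    proof
      fix \<xi> :: "'n mindex \<Rightarrow> real" assume "\<xi> \<in> dual_space d"
      then have "\<xi> \<in> fspan (fibre (Eprime X d N (Eseq X d N 0)) s)"
        using key[OF assms sX] by blast
      moreover have "fibre (Eprime X d N (Eseq X d N 0)) s \<subseteq> fibre (Eprime X d N (Eseq X d N k)) s"
        using Eprime_mono[OF Eseq0_sub[of X d N k]] unfolding fibre_def by blast
      ultimately have "\<xi> \<in> fspan (fibre (Eprime X d N (Eseq X d N k)) s)"
        using fspan_mono by blast
      then show "\<xi> \<in> fibre (paratangent X d N) s" using sX by (simp add: P fibre_def)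
    qed
  qed
qed

end
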